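(* Let $X$ be the two-dimensional cyclic quotient singularity attached to coprime integers $0<q<n$, let $K=-[\rho^0]-[\rho^1]$ be its canonical divisor, and let $D$ and $D'$ be torus invariant Weil divisors on $X$. Then \[ \mathrm{Ext}^1(D,K-D')\;=\;\mathrm{Ext}^1(D',K-D) \] as $M$-graded $R$-modules.
   Context: Fix coprime integers $0<q<n$. Let $N=M=\mathbb Z^2$, paired by the standard scalar product $\langle\cdot,\cdot\rangle$, and $M_{\mathbb Q}=\mathbb Q^2$. Put $\rho^0=(1,0)$, $\rho^1=(-q,n)$, $\sigma=\mathrm{cone}(\rho^0,\rho^1)$ and $\sigma^\vee=\{u\in M_{\mathbb Q}:\langle u,\rho^0\rangle\ge 0,\ \langle u,\rho^1\rangle\ge 0\}$. Let $R=\mathbb C[\sigma^\vee\cap M]$ be the semigroup algebra (monomials $x^u$), an $M$-graded ring, and $X=\mathrm{Spec}\,R$. A torus invariant Weil divisor is $D=a_0[\rho^0]+a_1[\rho^1]$ with $a_0,a_1\in\mathbb Z$ (sums and differences of divisors are taken coefficientwise). Its section polyhedron is $P_D=\{u\in M_{\mathbb Q}:\langle u,\rho^i\rangle\ge -a_i,\ i=0,1\}$ and its module of global sections is the $M$-graded $R$-module $\Gamma(D)=\bigoplus_{u\in P_D\cap M}\mathbb C\,x^u\subseteq\mathbb C[M]$. We write $\mathrm{Ext}^i(D,D')$ for $\mathrm{Ext}^i_R(\Gamma(D),\Gamma(D'))$, with its natural $M$-grading; equality of graded modules means degree-preserving isomorphism. *)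

theory Defs
  imports Complex_Main
begin

type_synonym lat = "int \<times> int"

definition ladd :: "lat \<Rightarrow> lat \<Rightarrow> lat" where
  "ladd u v = (fst u + fst v, snd u + snd v)"

definition lsub :: "lat \<Rightarrow> lat \<Rightarrow> lat" where
  "lsub u v = (fst u - fst v, snd u - snd v)"

definition pair :: "lat \<Rightarrow> lat \<Rightarrow> int" where
  "pair u v = fst u * fst v + snd u * snd v"

definition rho0 :: lat where "rho0 = (1, 0)"
definition rho1 :: "int \<Rightarrow> int \<Rightarrow> lat" where "rho1 q n = (-q, n)"

definition sigma_dual :: "int \<Rightarrow> int \<Rightarrow> lat set" where
  "sigma_dual q n = {u. pair u rho0 \<ge> 0 \<and> pair u (rho1 q n) \<ge> 0}"

text \<open>torus invariant Weil divisors D = a0[rho0] + a1[rho1], encoded as (a0, a1)\<close>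
type_synonym divisor = "int \<times> int"

definition div_sub :: "divisor \<Rightarrow> divisor \<Rightarrow> divisor" where
  "div_sub D E = (fst D - fst E, snd D - snd E)"

definition canonical :: divisor where "canonical = (-1, -1)"

definition sec_poly :: "int \<Rightarrow> int \<Rightarrow> divisor \<Rightarrow> lat set" where
  "sec_poly q n D = {u. pair u rho0 \<ge> - fst D \<and> pair u (rho1 q n) \<ge> - snd D}"

text \<open>an element of C[M] is a finitely supported coefficient function (coefficient of x^u)\<close>
type_synonym elt = "lat \<Rightarrow> complex"

definition supp :: "elt \<Rightarrow> lat set" where "supp f = {u. f u \<noteq> 0}"

definition ezero :: elt where "ezero = (\<lambda>_. 0)"

definition eadd :: "elt \<Rightarrow> elt \<Rightarrow> elt" where "eadd f g = (\<lambda>w. f w + g w)"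

definition esub :: "elt \<Rightarrow> elt \<Rightarrow> elt" where "esub f g = (\<lambda>w. f w - g w)"

definition cmul :: "elt \<Rightarrow> elt \<Rightarrow> elt" where
  "cmul f g = (\<lambda>w. \<Sum>v\<in>supp f. f v * g (lsub w v))"

definition span_on :: "lat set \<Rightarrow> elt set" where
  "span_on S = {f. finite (supp f) \<and> supp f \<subseteq> S}"

definition Rring :: "int \<Rightarrow> int \<Rightarrow> elt set" where
  "Rring q n = span_on (sigma_dual q n)"

definition Gamma :: "int \<Rightarrow> int \<Rightarrow> divisor \<Rightarrow> elt set" where
  "Gamma q n D = span_on (sec_poly q n D)"

definition homog :: "elt \<Rightarrow> lat \<Rightarrow> bool" where "homog f m \<longleftrightarrow> supp f \<subseteq> {m}"

text \<open>The graded free R-module F with basis e_v (v in P_D \<inter> M, deg e_v = v);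
  an element is v \<mapsto> coefficient in R of e_v.  The map F \<rightarrow> Gamma(D) sends e_v to x^v;
  its kernel is the syzygy module K.\<close>
type_synonym fre = "lat \<Rightarrow> elt"

definition free_mod :: "int \<Rightarrow> int \<Rightarrow> divisor \<Rightarrow> fre set" where
  "free_mod q n D = {x. finite {v. x v \<noteq> ezero} \<and> (\<forall>v. x v \<noteq> ezero \<longrightarrow> v \<in> sec_poly q n D)
                        \<and> (\<forall>v. x v \<in> Rring q n)}"

definition free_add :: "fre \<Rightarrow> fre \<Rightarrow> fre" where "free_add x y = (\<lambda>v. eadd (x v) (y v))"

definition free_act :: "elt \<Rightarrow> fre \<Rightarrow> fre" where "free_act r x = (\<lambda>v. cmul r (x v))"

definition free_homog :: "fre \<Rightarrow> lat \<Rightarrow> bool" where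
  "free_homog x m \<longleftrightarrow> (\<forall>v w. x v w \<noteq> 0 \<longrightarrow> ladd v w = m)"

definition augm :: "fre \<Rightarrow> elt" where
  "augm x = (\<lambda>w. \<Sum>v\<in>{v. x v \<noteq> ezero}. x v (lsub w v))"

definition syz :: "int \<Rightarrow> int \<Rightarrow> divisor \<Rightarrow> fre set" where
  "syz q n D = {x \<in> free_mod q n D. augm x = ezero}"

definition fhom :: "int \<Rightarrow> int \<Rightarrow> fre set \<Rightarrow> elt set \<Rightarrow> lat \<Rightarrow> (fre \<Rightarrow> elt) \<Rightarrow> bool" where
  "fhom q n Dom B k \<phi> \<longleftrightarrow>
     (\<forall>x\<in>Dom. \<phi> x \<in> B) \<and>
     (\<forall>x\<in>Dom. \<forall>y\<in>Dom. \<phi> (free_add x y) = eadd (\<phi> x) (\<phi> y)) \<and>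
     (\<forall>r\<in>Rring q n. \<forall>x\<in>Dom. \<phi> (free_act r x) = cmul r (\<phi> x)) \<and>
     (\<forall>x\<in>Dom. \<forall>m. free_homog x m \<longrightarrow> homog (\<phi> x) (ladd m k))"

definition ext1_cocyc :: "int \<Rightarrow> int \<Rightarrow> divisor \<Rightarrow> divisor \<Rightarrow> lat \<Rightarrow> (fre \<Rightarrow> elt) set" where
  "ext1_cocyc q n D D' k = {\<phi>. fhom q n (syz q n D) (Gamma q n D') k \<phi>}"

text \<open>two cocycles define the same class of Ext^1(D,D')_k iff their difference on K
  is the restriction of a degree-k homomorphism F \<rightarrow> Gamma(D')\<close>
definition ext1_rel :: "int \<Rightarrow> int \<Rightarrow> divisor \<Rightarrow> divisor \<Rightarrow> lat \<Rightarrow> (fre \<Rightarrow> elt) \<Rightarrow> (fre \<Rightarrow> elt) \<Rightarrow> bool" where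
  "ext1_rel q n D D' k \<phi> \<psi> \<longleftrightarrow>
     (\<exists>\<chi>. fhom q n (free_mod q n D) (Gamma q n D') k \<chi> \<and>
          (\<forall>x\<in>syz q n D. esub (\<phi> x) (\<psi> x) = \<chi> x))"

definition hadd :: "(fre \<Rightarrow> elt) \<Rightarrow> (fre \<Rightarrow> elt) \<Rightarrow> (fre \<Rightarrow> elt)" where
  "hadd \<phi> \<psi> = (\<lambda>x. eadd (\<phi> x) (\<psi> x))"

definition hact :: "elt \<Rightarrow> (fre \<Rightarrow> elt) \<Rightarrow> (fre \<Rightarrow> elt)" where
  "hact r \<phi> = (\<lambda>x. cmul r (\<phi> x))"

text \<open>Ext^1(D1,D2) and Ext^1(D3,D4) are isomorphic as M-graded R-modules:
  a family of degree-preserving maps on representatives inducing bijections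
  Ext^1(D1,D2)_k \<rightarrow> Ext^1(D3,D4)_k, additive and compatible with the action of
  every homogeneous element of R.\<close>
definition ext1_graded_iso :: "int \<Rightarrow> int \<Rightarrow> divisor \<Rightarrow> divisor \<Rightarrow> divisor \<Rightarrow> divisor \<Rightarrow> bool" where
  "ext1_graded_iso q n D1 D2 D3 D4 \<longleftrightarrow>
    (\<exists>\<Phi> :: lat \<Rightarrow> (fre \<Rightarrow> elt) \<Rightarrow> (fre \<Rightarrow> elt). \<forall>k.
       (\<forall>\<phi>\<in>ext1_cocyc q n D1 D2 k. \<Phi> k \<phi> \<in> ext1_cocyc q n D3 D4 k) \<and>
       (\<forall>\<phi>\<in>ext1_cocyc q n D1 D2 k. \<forall>\<psi>\<in>ext1_cocyc q n D1 D2 k.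
          ext1_rel q n D1 D2 k \<phi> \<psi> \<longleftrightarrow> ext1_rel q n D3 D4 k (\<Phi> k \<phi>) (\<Phi> k \<psi>)) \<and>
       (\<forall>\<chi>\<in>ext1_cocyc q n D3 D4 k. \<exists>\<phi>\<in>ext1_cocyc q n D1 D2 k. ext1_rel q n D3 D4 k (\<Phi> k \<phi>) \<chi>) \<and>
       (\<forall>\<phi>\<in>ext1_cocyc q n D1 D2 k. \<forall>\<psi>\<in>ext1_cocyc q n D1 D2 k.
          ext1_rel q n D3 D4 k (\<Phi> k (hadd \<phi> \<psi>)) (hadd (\<Phi> k \<phi>) (\<Phi> k \<psi>))) \<and>
       (\<forall>u. \<forall>r\<in>Rring q n. homog r u \<longrightarrow>
          (\<forall>\<phi>\<in>ext1_cocyc q n D1 D2 k.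
             ext1_rel q n D3 D4 (ladd k u) (\<Phi> (ladd k u) (hact r \<phi>)) (hact r (\<Phi> k \<phi>)))))"

end

theory Submission imports Defs begin

lemma fst_ladd[simp]: "fst (ladd u v) = fst u + fst v" by (simp add: ladd_def)
lemma snd_ladd[simp]: "snd (ladd u v) = snd u + snd v" by (simp add: ladd_def)
lemma fst_lsub[simp]: "fst (lsub u v) = fst u - fst v" by (simp add: lsub_def)
lemma snd_lsub[simp]: "snd (lsub u v) = snd u - snd v" by (simp add: lsub_def)
lemma ladd_lsub[simp]: "ladd v (lsub m v) = m" by (simp add: prod_eq_iff)
lemma lsub00: "(lsub a b = (0,0)) = (a = b)" by (auto simp: prod_eq_iff)
lemma lsub_eq_right: "lsub a b = lsub c b \<longleftrightarrow> a = c" by (auto simp: prod_eq_iff)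
lemma pair_rho0[simp]: "pair u rho0 = fst u" by (simp add: pair_def rho0_def)
lemma pair_rho1[simp]: "pair u (rho1 q n) = - q * fst u + n * snd u" by (simp add: pair_def rho1_def)

definition mono :: "complex \<Rightarrow> lat \<Rightarrow> elt" where "mono c u = (\<lambda>w. if w = u then c else 0)"

lemma supp_mono: "supp (mono c u) = (if c = 0 then {} else {u})"
  by (auto simp: supp_def mono_def)

lemma cmul_mono: "cmul (mono c u) g = (\<lambda>w. c * g (lsub w u))"
proof (rule ext)
  fix w show "cmul (mono c u) g w = c * g (lsub w u)"
    unfolding cmul_def supp_mono by (simp add: mono_def)
qed

lemma cmul_ezero[simp]: "cmul r ezero = ezero"
  by (rule ext) (simp add: cmul_def ezero_def)

lemma big: "0 < (n::int) \<Longrightarrow> \<bar>c\<bar> \<le> t \<Longrightarrow> c \<le> n * t"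
proof -
  assume a: "0 < n" "\<bar>c\<bar> \<le> t"
  hence "1 * t \<le> n * t" by (intro mult_right_mono) auto
  thus ?thesis using a by linarith
qed

locale cq = fixes q n :: int assumes npos: "0 < n"
begin

lemma sd_iff: "u \<in> sigma_dual q n \<longleftrightarrow> 0 \<le> fst u \<and> 0 \<le> - q * fst u + n * snd u"
  by (simp add: sigma_dual_def)
lemma sp_iff: "u \<in> sec_poly q n D \<longleftrightarrow> - fst D \<le> fst u \<and> - snd D \<le> - q * fst u + n * snd u"
  by (simp add: sec_poly_def)

lemma sd_add: "s \<in> sigma_dual q n \<Longrightarrow> t \<in> sigma_dual q n \<Longrightarrow> ladd s t \<in> sigma_dual q n"
  by (simp add: sd_iff algebra_simps)
lemma sd_zero: "(0,0) \<in> sigma_dual q n" by (simp add: sd_iff)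
lemma sp_add: "u \<in> sec_poly q n D \<Longrightarrow> s \<in> sigma_dual q n \<Longrightarrow> ladd u s \<in> sec_poly q n D"
  by (simp add: sd_iff sp_iff algebra_simps)

definition ub :: "lat \<Rightarrow> lat \<Rightarrow> bool" where "ub m v \<longleftrightarrow> lsub m v \<in> sigma_dual q n"

lemma ub_trans: "ub m' m \<Longrightarrow> ub m v \<Longrightarrow> ub m' v"
proof -
  assume "ub m' m" "ub m v"
  hence "ladd (lsub m' m) (lsub m v) \<in> sigma_dual q n" unfolding ub_def by (rule sd_add)
  moreover have "ladd (lsub m' m) (lsub m v) = lsub m' v" by (simp add: prod_eq_iff)
  ultimately show ?thesis by (simp add: ub_def)
qed

lemma ub_refl: "ub v v" by (simp add: ub_def sd_iff)

lemma ub_sp: "ub m v \<Longrightarrow> v \<in> sec_poly q n D \<Longrightarrow> m \<in> sec_poly q n D"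
proof -
  assume "ub m v" "v \<in> sec_poly q n D"
  hence "ladd v (lsub m v) \<in> sec_poly q n D" unfolding ub_def by (intro sp_add)
  moreover have "ladd v (lsub m v) = m" by (simp add: prod_eq_iff)
  ultimately show ?thesis by simp
qed

lemma ub_fst: "ub m v \<Longrightarrow> fst v \<le> fst m" by (simp add: ub_def sd_iff)
lemma ub_a1: "ub m v \<Longrightarrow> - q * fst v + n * snd v \<le> - q * fst m + n * snd m"
  by (simp add: ub_def sd_iff algebra_simps)

lemma ub_ex0: "\<exists>m. fst m = max (fst v) (fst w) \<and> ub m v \<and> ub m w"
proof -
  define a where "a = max (fst v) (fst w)"
  define M where "M = \<bar>snd v\<bar> + \<bar>snd w\<bar> + \<bar>q * (a - fst v)\<bar> + \<bar>q * (a - fst w)\<bar>"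
  have 1: "q * (a - fst v) \<le> n * (M - snd v)" by (rule big[OF npos]) (auto simp: M_def)
  have 2: "q * (a - fst w) \<le> n * (M - snd w)" by (rule big[OF npos]) (auto simp: M_def)
  show ?thesis
    by (rule exI[of _ "(a, M)"]) (use 1 2 in \<open>auto simp: ub_def sd_iff a_def algebra_simps\<close>)
qed

lemma ub_ex: "\<exists>m. ub m v \<and> ub m w" using ub_ex0 by blast

lemma ub_ex1: "\<exists>m. - q * fst m + n * snd m = max (- q * fst v + n * snd v) (- q * fst w + n * snd w) \<and> ub m v \<and> ub m w"
proof -
  have gen: "\<exists>m. - q * fst m + n * snd m = - q * fst w + n * snd w \<and> ub m v \<and> ub m w"
    if h: "- q * fst v + n * snd v \<le> - q * fst w + n * snd w" for v w
  proof -
    define t where "t = \<bar>fst w - fst v\<bar>"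
    have t0: "0 \<le> t" by (simp add: t_def)
    have 1: "fst v - fst w \<le> n * t" by (rule big[OF npos]) (auto simp: t_def)
    have 2: "0 \<le> n * t" using t0 npos by simp
    define m where "m = (fst w + t * n, snd w + t * q)"
    have "- q * fst m + n * snd m = - q * fst w + n * snd w" by (simp add: m_def algebra_simps)
    moreover have "ub m w" using 2 by (simp add: m_def ub_def sd_iff algebra_simps)
    moreover have "ub m v" using 1 h by (simp add: m_def ub_def sd_iff algebra_simps)
    ultimately show ?thesis by blast
  qed
  show ?thesis
  proof (cases "- q * fst v + n * snd v \<le> - q * fst w + n * snd w")
    case True thus ?thesis using gen[OF True] by (auto simp: max_def)
  next
    case False
    hence "- q * fst w + n * snd w \<le> - q * fst v + n * snd v" by simp
    from gen[OF this] show ?thesis using False by (auto simp: max_def)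
  qed
qed


definition ebas :: "lat \<Rightarrow> fre" where
  "ebas v = (\<lambda>v'. if v' = v then mono 1 (0,0) else ezero)"
definition bzc :: "complex \<Rightarrow> lat \<Rightarrow> lat \<Rightarrow> lat \<Rightarrow> fre" where
  "bzc c v w m = free_add (free_act (mono c (lsub m v)) (ebas v)) (free_act (mono (-c) (lsub m w)) (ebas w))"
definition Z :: fre where "Z = (\<lambda>_. ezero)"

lemma bzc_eval: "bzc c v w m v' u = (if v' = v \<and> u = lsub m v then c else 0) + (if v' = w \<and> u = lsub m w then -c else 0)"
  unfolding bzc_def free_add_def free_act_def eadd_def cmul_mono ebas_def
  by (simp add: mono_def ezero_def lsub00)

lemma mono_R: "u \<in> sigma_dual q n \<Longrightarrow> mono c u \<in> Rring q n"
  by (auto simp: Rring_def span_on_def supp_mono)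
lemma ezero_R: "ezero \<in> Rring q n"
  by (auto simp: Rring_def span_on_def supp_def ezero_def)
lemma supp_eadd: "supp (eadd f g) \<subseteq> supp f \<union> supp g" by (auto simp: supp_def eadd_def)
lemma supp_esub: "supp (esub f g) \<subseteq> supp f \<union> supp g" by (auto simp: supp_def esub_def)
lemma span_eadd: "f \<in> span_on A \<Longrightarrow> g \<in> span_on A \<Longrightarrow> eadd f g \<in> span_on A"
  using supp_eadd[of f g] by (auto simp: span_on_def intro: finite_subset)
lemma span_esub: "f \<in> span_on A \<Longrightarrow> g \<in> span_on A \<Longrightarrow> esub f g \<in> span_on A"
  using supp_esub[of f g] by (auto simp: span_on_def intro: finite_subset)

lemma homog_mono: "homog f m \<Longrightarrow> f = mono (f m) m"
  by (rule ext) (auto simp: homog_def supp_def mono_def)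
lemma homog_all: "(\<And>m. homog f m) \<Longrightarrow> f = ezero"
proof (rule ext)
  fix w assume h: "\<And>m. homog f m"
  have "supp f \<subseteq> {w}" "supp f \<subseteq> {ladd w (1,0)}" using h by (auto simp: homog_def)
  hence "w \<notin> supp f" by (auto simp: prod_eq_iff)
  thus "f w = ezero w" by (simp add: supp_def ezero_def)
qed

lemma Z_free_homog: "free_homog Z m" by (simp add: free_homog_def Z_def ezero_def)
lemma fhom_Z: "fhom q n Dom B k \<phi> \<Longrightarrow> Z \<in> Dom \<Longrightarrow> \<phi> Z = ezero"
proof (rule homog_all)
  fix m assume "fhom q n Dom B k \<phi>" "Z \<in> Dom"
  hence "homog (\<phi> Z) (ladd (lsub m k) k)" using Z_free_homog unfolding fhom_def by blast
  moreover have "ladd (lsub m k) k = m" by (simp add: prod_eq_iff)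
  ultimately show "homog (\<phi> Z) m" by simp
qed

lemma augm_sup: "finite W \<Longrightarrow> {v. x v \<noteq> ezero} \<subseteq> W \<Longrightarrow> augm x = (\<lambda>w. \<Sum>v\<in>W. x v (lsub w v))"
proof (rule ext)
  fix w assume W: "finite W" "{v. x v \<noteq> ezero} \<subseteq> W"
  show "augm x w = (\<Sum>v\<in>W. x v (lsub w v))" unfolding augm_def
    by (rule sum.mono_neutral_left[OF W(1) W(2)]) (auto simp: ezero_def)
qed

lemma Z_syz: "Z \<in> syz q n D"
proof -
  have "augm Z = (\<lambda>w. \<Sum>v\<in>{}. Z v (lsub w v))" by (rule augm_sup) (auto simp: Z_def)
  thus ?thesis using ezero_R by (auto simp: syz_def free_mod_def Z_def ezero_def)
qed

lemma ebas_free: "v \<in> sec_poly q n D \<Longrightarrow> ebas v \<in> free_mod q n D"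
  by (auto simp: free_mod_def ebas_def ezero_R intro!: mono_R sd_zero)
lemma ebas_homog: "free_homog (ebas v) v"
  by (auto simp: free_homog_def ebas_def mono_def ezero_def prod_eq_iff)

lemma bzc_nz: assumes "bzc c v w m v' u \<noteq> 0"
  shows "(v' = v \<and> u = lsub m v) \<or> (v' = w \<and> u = lsub m w)"
proof (rule ccontr)
  assume "\<not> ?thesis"
  hence a: "\<not> (v' = v \<and> u = lsub m v)" and b: "\<not> (v' = w \<and> u = lsub m w)" by blast+
  show False using assms unfolding bzc_eval if_not_P[OF a] if_not_P[OF b] by simp
qed

lemma bzc_support: "{v'. bzc c v w m v' \<noteq> ezero} \<subseteq> {v, w}"
proof
  fix v' assume "v' \<in> {v'. bzc c v w m v' \<noteq> ezero}"
  hence "bzc c v w m v' \<noteq> ezero" by simp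
  then obtain u where "bzc c v w m v' u \<noteq> 0" by (auto simp: ezero_def fun_eq_iff)
  from bzc_nz[OF this] show "v' \<in> {v, w}" by blast
qed

lemma bzc_syz:
  assumes "v \<in> sec_poly q n D" "w \<in> sec_poly q n D" "ub m v" "ub m w"
  shows "bzc c v w m \<in> syz q n D"
proof -
  have fin: "finite {v'. bzc c v w m v' \<noteq> ezero}" by (rule finite_subset[OF bzc_support]) simp
  have R: "bzc c v w m v' \<in> Rring q n" for v'
  proof -
    have "supp (bzc c v w m v') \<subseteq> {lsub m v, lsub m w}" unfolding supp_def using bzc_nz by blast
    moreover have "{lsub m v, lsub m w} \<subseteq> sigma_dual q n" using assms(3,4) by (auto simp: ub_def)
    ultimately show ?thesis unfolding Rring_def span_on_def by (auto intro: finite_subset)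
  qed
  have "augm (bzc c v w m) = (\<lambda>u. \<Sum>v'\<in>{v,w}. bzc c v w m v' (lsub u v'))"
    by (rule augm_sup[OF _ bzc_support]) simp
  also have "\<dots> = ezero"
  proof (rule ext)
    fix u show "(\<Sum>v'\<in>{v,w}. bzc c v w m v' (lsub u v')) = ezero u"
    proof (cases "v = w")
      case True thus ?thesis by (simp add: bzc_eval ezero_def)
    next
      case False
      thus ?thesis unfolding bzc_eval ezero_def using lsub_eq_right[of u v m] lsub_eq_right[of u w m] by simp
    qed
  qed
  finally have au: "augm (bzc c v w m) = ezero" .
  have "\<forall>v'. bzc c v w m v' \<noteq> ezero \<longrightarrow> v' \<in> sec_poly q n D"
    using bzc_support[of c v w m] assms(1,2) by blast
  hence "bzc c v w m \<in> free_mod q n D" using fin R unfolding free_mod_def by simp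
  thus ?thesis using au unfolding syz_def by simp
qed

lemma bzc_homog: "free_homog (bzc c v w m) m"
  unfolding free_homog_def
proof (intro allI impI)
  fix v' u assume "bzc c v w m v' u \<noteq> 0"
  from bzc_nz[OF this] show "ladd v' u = m" by (elim disjE) simp_all
qed


definition Lmap :: "lat \<Rightarrow> (lat \<Rightarrow> complex) \<Rightarrow> fre \<Rightarrow> elt" where
  "Lmap k a x = (\<lambda>w. \<Sum>v\<in>{v. x v \<noteq> ezero}. a v * x v (lsub w (ladd v k)))"

lemma Lmap_sup: "finite W \<Longrightarrow> {v. x v \<noteq> ezero} \<subseteq> W \<Longrightarrow> Lmap k a x = (\<lambda>w. \<Sum>v\<in>W. a v * x v (lsub w (ladd v k)))"
proof (rule ext)
  fix w assume W: "finite W" "{v. x v \<noteq> ezero} \<subseteq> W"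
  show "Lmap k a x w = (\<Sum>v\<in>W. a v * x v (lsub w (ladd v k)))" unfolding Lmap_def
    by (rule sum.mono_neutral_left[OF W(1) W(2)]) (auto simp: ezero_def)
qed

lemma fm_fin: "x \<in> free_mod q n D \<Longrightarrow> finite {v. x v \<noteq> ezero}" by (simp add: free_mod_def)
lemma fm_R: "x \<in> free_mod q n D \<Longrightarrow> x v \<in> Rring q n" unfolding free_mod_def by blast
lemma fm_A: "x \<in> free_mod q n D \<Longrightarrow> x v \<noteq> ezero \<Longrightarrow> v \<in> sec_poly q n D" unfolding free_mod_def by blast
lemma R_fin: "r \<in> Rring q n \<Longrightarrow> finite (supp r)" by (simp add: Rring_def span_on_def)
lemma R_S: "r \<in> Rring q n \<Longrightarrow> r u \<noteq> 0 \<Longrightarrow> u \<in> sigma_dual q n"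
  by (auto simp: Rring_def span_on_def supp_def)

lemma fadd_supp: "{v. free_add x y v \<noteq> ezero} \<subseteq> {v. x v \<noteq> ezero} \<union> {v. y v \<noteq> ezero}"
  by (auto simp: free_add_def eadd_def ezero_def)
lemma fact_supp: "{v. free_act r x v \<noteq> ezero} \<subseteq> {v. x v \<noteq> ezero}"
  by (auto simp: free_act_def)

lemma Lmap_add: assumes "x \<in> free_mod q n D" "y \<in> free_mod q n D"
  shows "Lmap k a (free_add x y) = eadd (Lmap k a x) (Lmap k a y)"
proof -
  let ?W = "{v. x v \<noteq> ezero} \<union> {v. y v \<noteq> ezero}"
  have f: "finite ?W" using assms by (simp add: fm_fin)
  have 1: "Lmap k a (free_add x y) = (\<lambda>w. \<Sum>v\<in>?W. a v * free_add x y v (lsub w (ladd v k)))"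
    by (rule Lmap_sup[OF f fadd_supp])
  have 2: "Lmap k a x = (\<lambda>w. \<Sum>v\<in>?W. a v * x v (lsub w (ladd v k)))" by (rule Lmap_sup[OF f]) auto
  have 3: "Lmap k a y = (\<lambda>w. \<Sum>v\<in>?W. a v * y v (lsub w (ladd v k)))" by (rule Lmap_sup[OF f]) auto
  show ?thesis unfolding 1 2 3
    by (rule ext) (simp add: eadd_def free_add_def sum.distrib distrib_left)
qed

lemma lsub_ladd: "lsub w (ladd v k) = lsub (lsub w k) v" by (simp add: prod_eq_iff)
lemma lsub_swap: "lsub (lsub w a) b = lsub (lsub w b) a" by (simp add: prod_eq_iff)

lemma Lmap_act: assumes "x \<in> free_mod q n D"
  shows "Lmap k a (free_act r x) = cmul r (Lmap k a x)"
proof -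
  let ?W = "{v. x v \<noteq> ezero}"
  have f: "finite ?W" using assms by (simp add: fm_fin)
  have 1: "Lmap k a (free_act r x) = (\<lambda>w. \<Sum>v\<in>?W. a v * free_act r x v (lsub w (ladd v k)))"
    by (rule Lmap_sup[OF f fact_supp])
  show ?thesis unfolding 1
  proof (rule ext)
    fix w
    have "(\<Sum>v\<in>?W. a v * free_act r x v (lsub w (ladd v k)))
       = (\<Sum>v\<in>?W. \<Sum>t\<in>supp r. r t * (a v * x v (lsub (lsub w t) (ladd v k))))"
      by (simp add: free_act_def cmul_def sum_distrib_left lsub_swap mult.left_commute)
    also have "\<dots> = (\<Sum>t\<in>supp r. \<Sum>v\<in>?W. r t * (a v * x v (lsub (lsub w t) (ladd v k))))"
      by (rule sum.swap)
    also have "\<dots> = cmul r (Lmap k a x) w"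
      by (simp add: cmul_def Lmap_def sum_distrib_left)
    finally show "(\<Sum>v\<in>?W. a v * free_act r x v (lsub w (ladd v k))) = cmul r (Lmap k a x) w" .
  qed
qed

lemma sum_nz: "(\<Sum>v\<in>W. f v) \<noteq> (0::complex) \<Longrightarrow> \<exists>v\<in>W. f v \<noteq> 0"
  by (meson sum.neutral)

lemma Lmap_homog: assumes "free_homog x m" shows "homog (Lmap k a x) (ladd m k)"
  unfolding homog_def
proof
  fix w assume "w \<in> supp (Lmap k a x)"
  hence "(\<Sum>v\<in>{v. x v \<noteq> ezero}. a v * x v (lsub w (ladd v k))) \<noteq> 0" by (simp add: supp_def Lmap_def)
  then obtain v where "a v * x v (lsub w (ladd v k)) \<noteq> 0" using sum_nz by blast
  hence "x v (lsub w (ladd v k)) \<noteq> 0" by simp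
  hence "ladd v (lsub w (ladd v k)) = m" using assms unfolding free_homog_def by blast
  hence "w = ladd m k" by (auto simp: prod_eq_iff)
  thus "w \<in> {ladd m k}" by simp
qed

lemma Lmap_nz: assumes "Lmap k a x w \<noteq> 0"
  shows "\<exists>v. x v \<noteq> ezero \<and> a v \<noteq> 0 \<and> x v (lsub w (ladd v k)) \<noteq> 0"
proof -
  from assms have "(\<Sum>v\<in>{v. x v \<noteq> ezero}. a v * x v (lsub w (ladd v k))) \<noteq> 0" by (simp add: Lmap_def)
  then obtain v where "v \<in> {v. x v \<noteq> ezero}" "a v * x v (lsub w (ladd v k)) \<noteq> 0" using sum_nz by blast
  hence "x v \<noteq> ezero \<and> a v \<noteq> 0 \<and> x v (lsub w (ladd v k)) \<noteq> 0" by simp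
  thus ?thesis by blast
qed

lemma Lmap_fin: assumes "x \<in> free_mod q n D" shows "finite (supp (Lmap k a x))"
proof -
  let ?U = "\<Union>v\<in>{v. x v \<noteq> ezero}. (\<lambda>u. ladd u (ladd v k)) ` supp (x v)"
  have "finite ?U" using assms by (auto intro!: finite_UN_I fm_fin R_fin fm_R)
  moreover have "supp (Lmap k a x) \<subseteq> ?U"
  proof
    fix w assume "w \<in> supp (Lmap k a x)"
    hence "Lmap k a x w \<noteq> 0" by (simp add: supp_def)
    from Lmap_nz[OF this] obtain v where v: "x v \<noteq> ezero" "x v (lsub w (ladd v k)) \<noteq> 0" by blast
    have "w = ladd (lsub w (ladd v k)) (ladd v k)" by (simp add: prod_eq_iff)
    moreover have "v \<in> {v. x v \<noteq> ezero}" "lsub w (ladd v k) \<in> supp (x v)" using v by (simp_all add: supp_def)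
    ultimately show "w \<in> ?U" by blast
  qed
  ultimately show ?thesis by (rule finite_subset[rotated])
qed

lemma Lmap_Gamma1:
  assumes x: "x \<in> free_mod q n D" and a: "\<forall>v\<in>sec_poly q n D. ladd v k \<notin> sec_poly q n E \<longrightarrow> a v = 0"
  shows "Lmap k a x \<in> Gamma q n E"
proof -
  have "supp (Lmap k a x) \<subseteq> sec_poly q n E"
  proof
    fix w assume "w \<in> supp (Lmap k a x)"
    hence "Lmap k a x w \<noteq> 0" by (simp add: supp_def)
    from Lmap_nz[OF this] obtain v where v: "x v \<noteq> ezero" "a v \<noteq> 0" "x v (lsub w (ladd v k)) \<noteq> 0" by blast
    have vA: "v \<in> sec_poly q n D" using fm_A[OF x v(1)] .
    hence "ladd v k \<in> sec_poly q n E" using a v(2) by blast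
    moreover have "lsub w (ladd v k) \<in> sigma_dual q n" using R_S[OF fm_R[OF x] v(3)] .
    ultimately have "ladd (ladd v k) (lsub w (ladd v k)) \<in> sec_poly q n E" by (rule sp_add)
    thus "w \<in> sec_poly q n E" by simp
  qed
  thus ?thesis using Lmap_fin[OF x] by (simp add: Gamma_def span_on_def)
qed

lemma Lmap_Gamma2:
  assumes x: "x \<in> syz q n D"
    and a: "\<forall>m. ladd m k \<notin> sec_poly q n E \<longrightarrow> (\<exists>c. \<forall>v\<in>sec_poly q n D. ub m v \<longrightarrow> a v = c)"
  shows "Lmap k a x \<in> Gamma q n E"
proof -
  have xf: "x \<in> free_mod q n D" and au: "augm x = ezero" using x by (auto simp: syz_def)
  have "supp (Lmap k a x) \<subseteq> sec_poly q n E"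
  proof
    fix w assume w: "w \<in> supp (Lmap k a x)"
    show "w \<in> sec_poly q n E"
    proof (rule ccontr)
      assume wn: "w \<notin> sec_poly q n E"
      define m where "m = lsub w k"
      have "ladd m k = w" by (simp add: m_def prod_eq_iff)
      with wn have "ladd m k \<notin> sec_poly q n E" by simp
      with a obtain c where c: "\<forall>v\<in>sec_poly q n D. ub m v \<longrightarrow> a v = c" by blast
      have "Lmap k a x w = (\<Sum>v\<in>{v. x v \<noteq> ezero}. a v * x v (lsub m v))"
        unfolding Lmap_def m_def lsub_ladd ..
      also have "\<dots> = (\<Sum>v\<in>{v. x v \<noteq> ezero}. c * x v (lsub m v))"
      proof (rule sum.cong[OF refl])
        fix v assume v: "v \<in> {v. x v \<noteq> ezero}"
        show "a v * x v (lsub m v) = c * x v (lsub m v)"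
        proof (cases "x v (lsub m v) = 0")
          case False
          hence "ub m v" using R_S[OF fm_R[OF xf] False] by (simp add: ub_def)
          moreover have "v \<in> sec_poly q n D" using fm_A[OF xf] v by simp
          ultimately show ?thesis using c by simp
        qed simp
      qed
      also have "\<dots> = c * augm x m" by (simp add: augm_def sum_distrib_left)
      also have "\<dots> = 0" using au by (simp add: ezero_def)
      finally show False using w by (simp add: supp_def)
    qed
  qed
  thus ?thesis using Lmap_fin[OF xf] by (simp add: Gamma_def span_on_def)
qed

lemma Lmap_fhom1:
  assumes "\<forall>v\<in>sec_poly q n D. ladd v k \<notin> sec_poly q n E \<longrightarrow> a v = 0"
  shows "fhom q n (free_mod q n D) (Gamma q n E) k (Lmap k a)"
  unfolding fhom_def
proof (intro conjI ballI allI impI)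
  fix x assume "x \<in> free_mod q n D" thus "Lmap k a x \<in> Gamma q n E" using assms by (rule Lmap_Gamma1)
next
  fix x y assume "x \<in> free_mod q n D" "y \<in> free_mod q n D"
  thus "Lmap k a (free_add x y) = eadd (Lmap k a x) (Lmap k a y)" by (rule Lmap_add)
next
  fix r x assume "x \<in> free_mod q n D" 
  thus "Lmap k a (free_act r x) = cmul r (Lmap k a x)" by (rule Lmap_act)
next
  fix x m assume "free_homog x m" thus "homog (Lmap k a x) (ladd m k)" by (rule Lmap_homog)
qed

lemma Lmap_fhom2:
  assumes "\<forall>m. ladd m k \<notin> sec_poly q n E \<longrightarrow> (\<exists>c. \<forall>v\<in>sec_poly q n D. ub m v \<longrightarrow> a v = c)"
  shows "fhom q n (syz q n D) (Gamma q n E) k (Lmap k a)"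
proof -
  have "\<And>x. x \<in> syz q n D \<Longrightarrow> x \<in> free_mod q n D" by (simp add: syz_def)
  note sf = this
  show ?thesis unfolding fhom_def
  proof (intro conjI ballI allI impI)
    fix x assume "x \<in> syz q n D" thus "Lmap k a x \<in> Gamma q n E" using assms by (rule Lmap_Gamma2)
  next
    fix x y assume "x \<in> syz q n D" "y \<in> syz q n D"
    thus "Lmap k a (free_add x y) = eadd (Lmap k a x) (Lmap k a y)" using sf Lmap_add by blast
  next
    fix r x assume "x \<in> syz q n D" 
    thus "Lmap k a (free_act r x) = cmul r (Lmap k a x)" using sf Lmap_act by blast
  next
    fix x m assume "free_homog x m" thus "homog (Lmap k a x) (ladd m k)" by (rule Lmap_homog)
  qed
qed


definition Tf :: "(fre \<Rightarrow> elt) \<Rightarrow> lat \<Rightarrow> lat \<Rightarrow> lat \<Rightarrow> lat \<Rightarrow> complex" where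
  "Tf \<phi> k v w m = \<phi> (bzc 1 v w m) (ladd m k)"

lemma lsub_0: "lsub u (0,0) = u" by (simp add: prod_eq_iff)

lemma bzc_scale: "bzc c v w m = free_act (mono c (0,0)) (bzc 1 v w m)"
  by (intro ext) (simp add: free_act_def cmul_mono bzc_eval lsub_0 distrib_left)

lemma lsub_shift_iff: "(lsub u s = lsub m v) = (u = lsub (ladd m s) v)" by (auto simp: prod_eq_iff)

lemma bzc_shift: "bzc 1 v w (ladd m s) = free_act (mono 1 s) (bzc 1 v w m)"
  by (intro ext) (simp add: free_act_def cmul_mono bzc_eval lsub_shift_iff)

lemma fhomD:
  assumes "fhom q n Dom B k \<phi>"
  shows "\<And>x. x \<in> Dom \<Longrightarrow> \<phi> x \<in> B"
    and "\<And>x y. x \<in> Dom \<Longrightarrow> y \<in> Dom \<Longrightarrow> \<phi> (free_add x y) = eadd (\<phi> x) (\<phi> y)"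
    and "\<And>r x. r \<in> Rring q n \<Longrightarrow> x \<in> Dom \<Longrightarrow> \<phi> (free_act r x) = cmul r (\<phi> x)"
    and "\<And>x m. x \<in> Dom \<Longrightarrow> free_homog x m \<Longrightarrow> homog (\<phi> x) (ladd m k)"
  using assms unfolding fhom_def by blast+

context
  fixes D E :: divisor and k :: lat and \<phi> :: "fre \<Rightarrow> elt"
  assumes coc: "fhom q n (syz q n D) (Gamma q n E) k \<phi>"
begin

lemma phi_bzc:
  assumes "v \<in> sec_poly q n D" "w \<in> sec_poly q n D" "ub m v" "ub m w"
  shows "\<phi> (bzc c v w m) = mono (c * Tf \<phi> k v w m) (ladd m k)"
proof -
  have b1: "bzc 1 v w m \<in> syz q n D" using assms by (rule bzc_syz)
  have h: "\<phi> (bzc 1 v w m) = mono (Tf \<phi> k v w m) (ladd m k)"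
    unfolding Tf_def by (rule homog_mono, rule fhomD(4)[OF coc b1 bzc_homog])
  have "\<phi> (bzc c v w m) = cmul (mono c (0,0)) (\<phi> (bzc 1 v w m))"
    unfolding bzc_scale[of c] by (rule fhomD(3)[OF coc mono_R[OF sd_zero] b1])
  also have "\<dots> = mono (c * Tf \<phi> k v w m) (ladd m k)"
    unfolding h cmul_mono by (rule ext) (simp add: mono_def lsub_0)
  finally show ?thesis .
qed

lemma Tf_shift:
  assumes "v \<in> sec_poly q n D" "w \<in> sec_poly q n D" "ub m v" "ub m w" "s \<in> sigma_dual q n"
  shows "Tf \<phi> k v w (ladd m s) = Tf \<phi> k v w m"
proof -
  have b1: "bzc 1 v w m \<in> syz q n D" using assms(1-4) by (rule bzc_syz)
  have "\<phi> (bzc 1 v w (ladd m s)) = cmul (mono 1 s) (\<phi> (bzc 1 v w m))"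
    unfolding bzc_shift by (rule fhomD(3)[OF coc mono_R[OF assms(5)] b1])
  moreover have "lsub (ladd (ladd m s) k) s = ladd m k" by (simp add: prod_eq_iff)
  ultimately show ?thesis unfolding Tf_def by (simp add: cmul_mono)
qed

lemma Tf_indep:
  assumes "v \<in> sec_poly q n D" "w \<in> sec_poly q n D" "ub m v" "ub m w" "ub m' v" "ub m' w"
  shows "Tf \<phi> k v w m = Tf \<phi> k v w m'"
proof -
  obtain M where M: "ub M m" "ub M m'" using ub_ex by blast
  have e1: "M = ladd m (lsub M m)" and e2: "M = ladd m' (lsub M m')" by (simp_all add: prod_eq_iff)
  have "Tf \<phi> k v w M = Tf \<phi> k v w m"
    using Tf_shift[OF assms(1-4), of "lsub M m"] M(1) e1 by (simp add: ub_def)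
  moreover have "Tf \<phi> k v w M = Tf \<phi> k v w m'"
    using Tf_shift[OF assms(1,2,5,6), of "lsub M m'"] M(2) e2 by (simp add: ub_def)
  ultimately show ?thesis by simp
qed

lemma Tf_add:
  assumes "v \<in> sec_poly q n D" "w \<in> sec_poly q n D" "u \<in> sec_poly q n D" "ub m v" "ub m w" "ub m u"
  shows "Tf \<phi> k v w m + Tf \<phi> k w u m = Tf \<phi> k v u m"
proof -
  have b1: "bzc 1 v w m \<in> syz q n D" using assms by (intro bzc_syz)
  have b2: "bzc 1 w u m \<in> syz q n D" using assms by (intro bzc_syz)
  have "free_add (bzc 1 v w m) (bzc 1 w u m) = bzc 1 v u m"
    by (intro ext) (simp add: free_add_def eadd_def bzc_eval)
  hence "\<phi> (bzc 1 v u m) = eadd (\<phi> (bzc 1 v w m)) (\<phi> (bzc 1 w u m))"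
    using fhomD(2)[OF coc b1 b2] by simp
  thus ?thesis unfolding Tf_def by (simp add: eadd_def)
qed

lemma Tf_vv:
  assumes "v \<in> sec_poly q n D" "ub m v"
  shows "Tf \<phi> k v v m = 0"
  using Tf_add[OF assms(1) assms(1) assms(1) assms(2) assms(2) assms(2)] by simp

lemma Tf_van:
  assumes "v \<in> sec_poly q n D" "w \<in> sec_poly q n D" "ub m v" "ub m w" "ladd m k \<notin> sec_poly q n E"
  shows "Tf \<phi> k v w m = 0"
proof -
  have b1: "bzc 1 v w m \<in> syz q n D" using assms by (intro bzc_syz)
  have "\<phi> (bzc 1 v w m) \<in> Gamma q n E" by (rule fhomD(1)[OF coc b1])
  hence "supp (\<phi> (bzc 1 v w m)) \<subseteq> sec_poly q n E" by (simp add: Gamma_def span_on_def)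
  thus ?thesis unfolding Tf_def using assms(5) by (auto simp: supp_def)
qed

end


definition inC0 :: "divisor \<Rightarrow> lat \<Rightarrow> lat \<Rightarrow> bool" where
  "inC0 E k m \<longleftrightarrow> fst (ladd m k) < - fst E"
definition inC1 :: "divisor \<Rightarrow> lat \<Rightarrow> lat \<Rightarrow> bool" where
  "inC1 E k m \<longleftrightarrow> - q * fst (ladd m k) + n * snd (ladd m k) < - snd E"

lemma notB: "ladd m k \<notin> sec_poly q n E \<longleftrightarrow> inC0 E k m \<or> inC1 E k m"
  unfolding sp_iff inC0_def inC1_def by linarith

definition good :: "divisor \<Rightarrow> divisor \<Rightarrow> lat \<Rightarrow> bool" where
  "good D E k \<longleftrightarrow> (\<exists>p\<in>sec_poly q n D. inC0 E k p) \<and> (\<exists>p\<in>sec_poly q n D. inC1 E k p)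
     \<and> \<not> (\<exists>p\<in>sec_poly q n D. inC0 E k p \<and> inC1 E k p)"
definition pp0 :: "divisor \<Rightarrow> divisor \<Rightarrow> lat \<Rightarrow> lat" where
  "pp0 D E k = (SOME p. p \<in> sec_poly q n D \<and> inC0 E k p)"
definition pp1 :: "divisor \<Rightarrow> divisor \<Rightarrow> lat \<Rightarrow> lat" where
  "pp1 D E k = (SOME p. p \<in> sec_poly q n D \<and> inC1 E k p)"
definition mmx :: "lat \<Rightarrow> lat \<Rightarrow> lat" where
  "mmx v w = (SOME m. ub m v \<and> ub m w)"

lemma mmx: "ub (mmx v w) v" "ub (mmx v w) w"
  using someI_ex[OF ub_ex[of v w]] unfolding mmx_def by blast+

lemma good_pp:
  assumes "good D E k"
  shows "pp0 D E k \<in> sec_poly q n D" "inC0 E k (pp0 D E k)" "\<not> inC1 E k (pp0 D E k)"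
    "pp1 D E k \<in> sec_poly q n D" "inC1 E k (pp1 D E k)" "\<not> inC0 E k (pp1 D E k)"
proof -
  have a: "\<exists>p. p \<in> sec_poly q n D \<and> inC0 E k p" "\<exists>p. p \<in> sec_poly q n D \<and> inC1 E k p"
    using assms unfolding good_def by blast+
  have b: "pp0 D E k \<in> sec_poly q n D \<and> inC0 E k (pp0 D E k)" unfolding pp0_def by (rule someI_ex[OF a(1)])
  have c: "pp1 D E k \<in> sec_poly q n D \<and> inC1 E k (pp1 D E k)" unfolding pp1_def by (rule someI_ex[OF a(2)])
  show "pp0 D E k \<in> sec_poly q n D" "inC0 E k (pp0 D E k)" "pp1 D E k \<in> sec_poly q n D" "inC1 E k (pp1 D E k)"
    using b c by auto
  show "\<not> inC1 E k (pp0 D E k)" "\<not> inC0 E k (pp1 D E k)" using b c assms unfolding good_def by blast+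
qed

definition Jf :: "divisor \<Rightarrow> divisor \<Rightarrow> lat \<Rightarrow> (fre \<Rightarrow> elt) \<Rightarrow> complex" where
  "Jf D E k \<phi> = (if good D E k then Tf \<phi> k (pp1 D E k) (pp0 D E k) (mmx (pp1 D E k) (pp0 D E k)) else 0)"

lemma ub_C0: "ub m v \<Longrightarrow> inC0 E k m \<Longrightarrow> inC0 E k v"
  using ub_fst[of m v] by (simp add: inC0_def)
lemma ub_C1: "ub m v \<Longrightarrow> inC1 E k m \<Longrightarrow> inC1 E k v"
  using ub_a1[of m v] by (simp add: inC1_def algebra_simps)

lemma conn0: "inC0 E k v \<Longrightarrow> inC0 E k w \<Longrightarrow> \<exists>m. ub m v \<and> ub m w \<and> inC0 E k m"
proof -
  assume a: "inC0 E k v" "inC0 E k w"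
  obtain m where m: "fst m = max (fst v) (fst w)" "ub m v" "ub m w" using ub_ex0 by blast
  have "inC0 E k m" using a m(1) by (simp add: inC0_def max_def)
  thus ?thesis using m by blast
qed

lemma conn1: "inC1 E k v \<Longrightarrow> inC1 E k w \<Longrightarrow> \<exists>m. ub m v \<and> ub m w \<and> inC1 E k m"
proof -
  assume a: "inC1 E k v" "inC1 E k w"
  obtain m where m: "- q * fst m + n * snd m = max (- q * fst v + n * snd v) (- q * fst w + n * snd w)" "ub m v" "ub m w"
    using ub_ex1 by blast
  have "inC1 E k m" using a m(1) by (simp add: inC1_def max_def algebra_simps)
  thus ?thesis using m by blast
qed

lemma sp_ne: "\<exists>p. p \<in> sec_poly q n D"
proof -
  define t where "t = \<bar>snd D\<bar> + \<bar>q * fst D\<bar>"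
  have "- snd D - q * fst D \<le> n * t" by (rule big[OF npos]) (auto simp: t_def)
  hence "(- fst D, t) \<in> sec_poly q n D" by (simp add: sp_iff algebra_simps)
  thus ?thesis by blast
qed

definition Tsys :: "divisor \<Rightarrow> divisor \<Rightarrow> lat \<Rightarrow> (lat \<Rightarrow> lat \<Rightarrow> lat \<Rightarrow> complex) \<Rightarrow> bool" where
  "Tsys D E k \<Delta> \<longleftrightarrow>
    (\<forall>v w m m'. v \<in> sec_poly q n D \<longrightarrow> w \<in> sec_poly q n D \<longrightarrow> ub m v \<longrightarrow> ub m w \<longrightarrow> ub m' v \<longrightarrow> ub m' w
        \<longrightarrow> \<Delta> v w m = \<Delta> v w m') \<and>
    (\<forall>v w u m. v \<in> sec_poly q n D \<longrightarrow> w \<in> sec_poly q n D \<longrightarrow> u \<in> sec_poly q n D \<longrightarrow> ub m v \<longrightarrow> ub m w \<longrightarrow> ub m u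
        \<longrightarrow> \<Delta> v w m + \<Delta> w u m = \<Delta> v u m) \<and>
    (\<forall>v w m. v \<in> sec_poly q n D \<longrightarrow> w \<in> sec_poly q n D \<longrightarrow> ub m v \<longrightarrow> ub m w \<longrightarrow> ladd m k \<notin> sec_poly q n E
        \<longrightarrow> \<Delta> v w m = 0)"

lemma Tsys_Tf: assumes c: "fhom q n (syz q n D) (Gamma q n E) k \<phi>" shows "Tsys D E k (Tf \<phi> k)"
  unfolding Tsys_def
proof (intro conjI allI impI)
  fix v w m m' assume "v \<in> sec_poly q n D" "w \<in> sec_poly q n D" "ub m v" "ub m w" "ub m' v" "ub m' w"
  thus "Tf \<phi> k v w m = Tf \<phi> k v w m'" by (rule Tf_indep[OF c])
next
  fix v w u m assume "v \<in> sec_poly q n D" "w \<in> sec_poly q n D" "u \<in> sec_poly q n D" "ub m v" "ub m w" "ub m u"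
  thus "Tf \<phi> k v w m + Tf \<phi> k w u m = Tf \<phi> k v u m" by (rule Tf_add[OF c])
next
  fix v w m assume "v \<in> sec_poly q n D" "w \<in> sec_poly q n D" "ub m v" "ub m w" "ladd m k \<notin> sec_poly q n E"
  thus "Tf \<phi> k v w m = 0" by (rule Tf_van[OF c])
qed

lemma TsysD:
  assumes "Tsys D E k \<Delta>"
  shows "\<And>v w m m'. v \<in> sec_poly q n D \<Longrightarrow> w \<in> sec_poly q n D \<Longrightarrow> ub m v \<Longrightarrow> ub m w \<Longrightarrow> ub m' v \<Longrightarrow> ub m' w
        \<Longrightarrow> \<Delta> v w m = \<Delta> v w m'"
    and "\<And>v w u m. v \<in> sec_poly q n D \<Longrightarrow> w \<in> sec_poly q n D \<Longrightarrow> u \<in> sec_poly q n D \<Longrightarrow> ub m v \<Longrightarrow> ub m w \<Longrightarrow> ub m u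
        \<Longrightarrow> \<Delta> v w m + \<Delta> w u m = \<Delta> v u m"
    and "\<And>v w m. v \<in> sec_poly q n D \<Longrightarrow> w \<in> sec_poly q n D \<Longrightarrow> ub m v \<Longrightarrow> ub m w \<Longrightarrow> ladd m k \<notin> sec_poly q n E
        \<Longrightarrow> \<Delta> v w m = 0"
  using assms unfolding Tsys_def by blast+

lemma Tsys_diff: "Tsys D E k \<Delta>1 \<Longrightarrow> Tsys D E k \<Delta>2 \<Longrightarrow> Tsys D E k (\<lambda>v w m. \<Delta>1 v w m - \<Delta>2 v w m)"
proof -
  assume a: "Tsys D E k \<Delta>1" "Tsys D E k \<Delta>2"
  show ?thesis unfolding Tsys_def
  proof (intro conjI allI impI)
    fix v w m m' assume h: "v \<in> sec_poly q n D" "w \<in> sec_poly q n D" "ub m v" "ub m w" "ub m' v" "ub m' w"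
    have "\<Delta>1 v w m = \<Delta>1 v w m'" "\<Delta>2 v w m = \<Delta>2 v w m'" using TsysD(1)[OF a(1) h] TsysD(1)[OF a(2) h] .
    thus "\<Delta>1 v w m - \<Delta>2 v w m = \<Delta>1 v w m' - \<Delta>2 v w m'" by simp
  next
    fix v w u m assume h: "v \<in> sec_poly q n D" "w \<in> sec_poly q n D" "u \<in> sec_poly q n D" "ub m v" "ub m w" "ub m u"
    have "\<Delta>1 v w m + \<Delta>1 w u m = \<Delta>1 v u m" "\<Delta>2 v w m + \<Delta>2 w u m = \<Delta>2 v u m"
      using TsysD(2)[OF a(1) h] TsysD(2)[OF a(2) h] .
    moreover have "\<Delta>1 v w m - \<Delta>2 v w m + (\<Delta>1 w u m - \<Delta>2 w u m) = (\<Delta>1 v w m + \<Delta>1 w u m) - (\<Delta>2 v w m + \<Delta>2 w u m)"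
      by (simp add: algebra_simps)
    ultimately show "\<Delta>1 v w m - \<Delta>2 v w m + (\<Delta>1 w u m - \<Delta>2 w u m) = \<Delta>1 v u m - \<Delta>2 v u m" by simp
  next
    fix v w m assume h: "v \<in> sec_poly q n D" "w \<in> sec_poly q n D" "ub m v" "ub m w" "ladd m k \<notin> sec_poly q n E"
    have "\<Delta>1 v w m = 0" "\<Delta>2 v w m = 0" using TsysD(3)[OF a(1) h] TsysD(3)[OF a(2) h] .
    thus "\<Delta>1 v w m - \<Delta>2 v w m = 0" by simp
  qed
qed

context
  fixes D E :: divisor and k :: lat and \<Delta> :: "lat \<Rightarrow> lat \<Rightarrow> lat \<Rightarrow> complex"
  assumes ts: "Tsys D E k \<Delta>"
begin

definition "Dp v w = \<Delta> v w (mmx v w)"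

lemma D1: "v \<in> sec_poly q n D \<Longrightarrow> w \<in> sec_poly q n D \<Longrightarrow> ub m v \<Longrightarrow> ub m w \<Longrightarrow> \<Delta> v w m = Dp v w"
  unfolding Dp_def using TsysD(1)[OF ts _ _ _ _ mmx[of v w]] by blast

lemma D2: assumes "v \<in> sec_poly q n D" "w \<in> sec_poly q n D" "u \<in> sec_poly q n D"
  shows "Dp v w + Dp w u = Dp v u"
proof -
  obtain M where M: "ub M v" "ub M (mmx w u)" using ub_ex by blast
  have Mw: "ub M w" and Mu: "ub M u" using ub_trans[OF M(2) mmx(1)] ub_trans[OF M(2) mmx(2)] .
  have "\<Delta> v w M + \<Delta> w u M = \<Delta> v u M" using TsysD(2)[OF ts assms M(1) Mw Mu] .
  thus ?thesis using D1 assms M(1) Mw Mu by metis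
qed

lemma D3: "v \<in> sec_poly q n D \<Longrightarrow> Dp v v = 0"
  using D2[of v v v] by simp

lemma Dsym: "v \<in> sec_poly q n D \<Longrightarrow> w \<in> sec_poly q n D \<Longrightarrow> Dp v w = - Dp w v"
  using D2[of v w v] D3[of v] by (simp add: eq_neg_iff_add_eq_0)

lemma D4a: assumes "v \<in> sec_poly q n D" "w \<in> sec_poly q n D" "inC0 E k v" "inC0 E k w"
  shows "Dp v w = 0"
proof -
  obtain m where m: "ub m v" "ub m w" "inC0 E k m" using conn0[OF assms(3,4)] by blast
  hence "ladd m k \<notin> sec_poly q n E" by (simp add: notB)
  hence "\<Delta> v w m = 0" using TsysD(3)[OF ts assms(1,2) m(1,2)] by blast
  thus ?thesis using D1[OF assms(1,2) m(1,2)] by simp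
qed

lemma D4b: assumes "v \<in> sec_poly q n D" "w \<in> sec_poly q n D" "inC1 E k v" "inC1 E k w"
  shows "Dp v w = 0"
proof -
  obtain m where m: "ub m v" "ub m w" "inC1 E k m" using conn1[OF assms(3,4)] by blast
  hence "ladd m k \<notin> sec_poly q n E" by (simp add: notB)
  hence "\<Delta> v w m = 0" using TsysD(3)[OF ts assms(1,2) m(1,2)] by blast
  thus ?thesis using D1[OF assms(1,2) m(1,2)] by simp
qed

lemma base_ex:
  assumes "good D E k \<Longrightarrow> \<Delta> (pp1 D E k) (pp0 D E k) (mmx (pp1 D E k) (pp0 D E k)) = 0"
  shows "\<exists>b\<in>sec_poly q n D. \<forall>v\<in>sec_poly q n D. (inC0 E k v \<or> inC1 E k v) \<longrightarrow> Dp v b = 0"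
proof (cases "\<exists>p\<in>sec_poly q n D. inC0 E k p \<and> inC1 E k p")
  case True
  then obtain b where b: "b \<in> sec_poly q n D" "inC0 E k b" "inC1 E k b" by blast
  show ?thesis using b D4a D4b by blast
next
  case nb: False
  show ?thesis
  proof (cases "(\<exists>p\<in>sec_poly q n D. inC0 E k p) \<and> (\<exists>p\<in>sec_poly q n D. inC1 E k p)")
    case True
    hence g: "good D E k" using nb by (simp add: good_def)
    note pp = good_pp[OF g]
    have "Dp (pp1 D E k) (pp0 D E k) = 0" using assms[OF g] by (simp add: Dp_def)
    moreover have "\<forall>v\<in>sec_poly q n D. inC1 E k v \<longrightarrow> Dp v (pp1 D E k) = 0" using D4b pp by blast
    ultimately have "\<forall>v\<in>sec_poly q n D. inC1 E k v \<longrightarrow> Dp v (pp0 D E k) = 0" using D2 pp by fastforce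
    moreover have "\<forall>v\<in>sec_poly q n D. inC0 E k v \<longrightarrow> Dp v (pp0 D E k) = 0" using D4a pp by blast
    ultimately show ?thesis using pp by blast
  next
    case False
    show ?thesis
    proof (cases "\<exists>p\<in>sec_poly q n D. inC0 E k p")
      case True
      then obtain b where "b \<in> sec_poly q n D" "inC0 E k b" by blast
      thus ?thesis using False True D4a by blast
    next
      case F2: False
      show ?thesis
      proof (cases "\<exists>p\<in>sec_poly q n D. inC1 E k p")
        case True
        then obtain b where "b \<in> sec_poly q n D" "inC1 E k b" by blast
        thus ?thesis using F2 D4b by blast
      next
        case False
        obtain b where "b \<in> sec_poly q n D" using sp_ne by blast
        thus ?thesis using F2 False by blast
      qed
    qed
  qed
qed

lemma potential:
  assumes "good D E k \<Longrightarrow> \<Delta> (pp1 D E k) (pp0 D E k) (mmx (pp1 D E k) (pp0 D E k)) = 0"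
  shows "\<exists>a. (\<forall>v\<in>sec_poly q n D. ladd v k \<notin> sec_poly q n E \<longrightarrow> a v = 0) \<and>
             (\<forall>v w m. v \<in> sec_poly q n D \<longrightarrow> w \<in> sec_poly q n D \<longrightarrow> ub m v \<longrightarrow> ub m w \<longrightarrow> \<Delta> v w m = a v - a w)"
proof -
  obtain b where b: "b \<in> sec_poly q n D" "\<forall>v\<in>sec_poly q n D. (inC0 E k v \<or> inC1 E k v) \<longrightarrow> Dp v b = 0"
    using base_ex[OF assms] by blast
  have 1: "\<forall>v\<in>sec_poly q n D. ladd v k \<notin> sec_poly q n E \<longrightarrow> Dp v b = 0" using b(2) by (simp add: notB)
  have 2: "\<Delta> v w m = Dp v b - Dp w b" if "v \<in> sec_poly q n D" "w \<in> sec_poly q n D" "ub m v" "ub m w" for v w m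
  proof -
    have "\<Delta> v w m = Dp v w" using D1 that by blast
    also have "\<dots> = Dp v b + Dp b w" using D2[OF that(1) b(1) that(2)] by simp
    also have "\<dots> = Dp v b - Dp w b" using Dsym[OF b(1) that(2)] by simp
    finally show ?thesis .
  qed
  show ?thesis
  proof (rule exI[of _ "\<lambda>v. Dp v b"], intro conjI ballI allI impI)
    fix v assume "v \<in> sec_poly q n D" "ladd v k \<notin> sec_poly q n E" thus "Dp v b = 0" using 1 by blast
  next
    fix v w m assume "v \<in> sec_poly q n D" "w \<in> sec_poly q n D" "ub m v" "ub m w"
    thus "\<Delta> v w m = Dp v b - Dp w b" by (rule 2)
  qed
qed

end


definition Sx :: "fre \<Rightarrow> (lat \<times> lat) set" where "Sx x = {(v,u). x v u \<noteq> 0}"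

lemma Sx_fin: assumes "x \<in> free_mod q n D" shows "finite (Sx x)"
proof -
  have "Sx x \<subseteq> Sigma {v. x v \<noteq> ezero} (\<lambda>v. supp (x v))"
    by (auto simp: Sx_def supp_def ezero_def)
  moreover have "finite (Sigma {v. x v \<noteq> ezero} (\<lambda>v. supp (x v)))"
    using assms by (intro finite_SigmaI fm_fin R_fin fm_R)
  ultimately show ?thesis by (rule finite_subset)
qed

lemma Sx_empty: "Sx x = {} \<Longrightarrow> x = Z"
  by (intro ext) (auto simp: Sx_def Z_def ezero_def)

lemma Lmap_Z: "Lmap k a Z = ezero"
  by (rule ext) (simp add: Lmap_def Z_def ezero_def)

lemma Lmap_bzc:
  assumes "v \<noteq> w"
  shows "Lmap k a (bzc c v w m) = mono (c * (a v - a w)) (ladd m k)"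
proof -
  have "Lmap k a (bzc c v w m) = mono (Lmap k a (bzc c v w m) (ladd m k)) (ladd m k)"
    by (rule homog_mono, rule Lmap_homog, rule bzc_homog)
  moreover have "Lmap k a (bzc c v w m) (ladd m k) = c * (a v - a w)"
  proof -
    have "Lmap k a (bzc c v w m) (ladd m k) = (\<Sum>v'\<in>{v,w}. a v' * bzc c v w m v' (lsub (ladd m k) (ladd v' k)))"
      by (subst Lmap_sup[OF _ bzc_support]) simp_all
    also have "\<dots> = a v * bzc c v w m v (lsub (ladd m k) (ladd v k)) + a w * bzc c v w m w (lsub (ladd m k) (ladd w k))"
      using assms by simp
    also have "\<dots> = c * (a v - a w)"
    proof -
      have e: "lsub (ladd m k) (ladd v' k) = lsub m v'" for v' by (simp add: prod_eq_iff)
      show ?thesis unfolding e bzc_eval using assms by (simp add: algebra_simps)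
    qed
    finally show ?thesis .
  qed
  ultimately show ?thesis by simp
qed

lemma cob:
  assumes cp: "fhom q n (syz q n D) (Gamma q n E) k \<phi>" and cs: "fhom q n (syz q n D) (Gamma q n E) k \<psi>"
    and a: "\<And>v w m. v \<in> sec_poly q n D \<Longrightarrow> w \<in> sec_poly q n D \<Longrightarrow> ub m v \<Longrightarrow> ub m w \<Longrightarrow>
           Tf \<phi> k v w m - Tf \<psi> k v w m = a v - a w"
  shows "x \<in> syz q n D \<Longrightarrow> esub (\<phi> x) (\<psi> x) = Lmap k a x"
proof (induction "card (Sx x)" arbitrary: x rule: less_induct)
  case less
  have xs: "x \<in> syz q n D" by fact
  have xf: "x \<in> free_mod q n D" and au: "augm x = ezero" using xs by (auto simp: syz_def)
  show ?case
  proof (cases "Sx x = {}")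
    case True
    hence "x = Z" by (rule Sx_empty)
    thus ?thesis using fhom_Z[OF cp Z_syz] fhom_Z[OF cs Z_syz] Lmap_Z by (simp add: esub_def ezero_def)
  next
    case False
    then obtain v t where vt: "x v t \<noteq> 0" by (auto simp: Sx_def)
    define m where "m = ladd v t"
    define c where "c = x v t"
    define V where "V = {v. x v \<noteq> ezero}"
    have fV: "finite V" using fm_fin[OF xf] by (simp add: V_def)
    have vV: "v \<in> V" using vt by (auto simp: V_def ezero_def)
    have mt: "lsub m v = t" by (simp add: m_def prod_eq_iff)
    have "augm x m = 0" using au by (simp add: ezero_def)
    hence "(\<Sum>v'\<in>V. x v' (lsub m v')) = 0" unfolding augm_def V_def .
    hence "x v t + (\<Sum>v'\<in>V - {v}. x v' (lsub m v')) = 0" using sum.remove[OF fV vV, of "\<lambda>v'. x v' (lsub m v')"] mt by simp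
    hence "(\<Sum>v'\<in>V - {v}. x v' (lsub m v')) \<noteq> 0" using vt by auto
    then obtain v' where v': "v' \<in> V" "v' \<noteq> v" "x v' (lsub m v') \<noteq> 0" using sum_nz by blast
    have vA: "v \<in> sec_poly q n D" using fm_A[OF xf] vV by (simp add: V_def)
    have v'A: "v' \<in> sec_poly q n D" using fm_A[OF xf] v'(1) by (simp add: V_def)
    have ubv: "ub m v" using R_S[OF fm_R[OF xf] vt] mt by (simp add: ub_def)
    have ubv': "ub m v'" using R_S[OF fm_R[OF xf] v'(3)] by (simp add: ub_def)
    define b where "b = bzc c v v' m"
    have bs: "b \<in> syz q n D" unfolding b_def using vA v'A ubv ubv' by (rule bzc_syz)
    have bf: "b \<in> free_mod q n D" using bs by (simp add: syz_def)
    define x' where "x' = (\<lambda>w. esub (x w) (b w))"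
    have xx: "x = free_add x' b" by (intro ext) (simp add: x'_def free_add_def eadd_def esub_def)
    let ?W = "V \<union> {v, v'}"
    have fW: "finite ?W" using fV by simp
    have bW: "{w. b w \<noteq> ezero} \<subseteq> ?W" unfolding b_def using bzc_support by blast
    have x'W: "{w. x' w \<noteq> ezero} \<subseteq> ?W"
    proof
      fix w assume w: "w \<in> {w. x' w \<noteq> ezero}"
      show "w \<in> ?W"
      proof (rule ccontr)
        assume nw: "w \<notin> ?W"
        hence "x w = ezero" by (simp add: V_def)
        moreover have "b w = ezero" using nw bW by blast
        ultimately have "x' w = ezero" by (simp add: x'_def esub_def ezero_def)
        thus False using w by simp
      qed
    qed
    have x'f: "x' \<in> free_mod q n D"
      unfolding free_mod_def
    proof (intro CollectI conjI allI impI)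
      show "finite {w. x' w \<noteq> ezero}" using finite_subset[OF x'W fW] .
    next
      fix w assume "x' w \<noteq> ezero"
      hence "w \<in> ?W" using x'W by blast
      hence "w \<in> V \<or> w = v \<or> w = v'" by blast
      thus "w \<in> sec_poly q n D"
      proof (elim disjE)
        assume "w \<in> V" hence "x w \<noteq> ezero" by (simp add: V_def)
        thus ?thesis by (rule fm_A[OF xf])
      qed (use vA v'A in simp_all)
    next
      fix w show "x' w \<in> Rring q n" unfolding x'_def Rring_def
        using fm_R[OF xf] fm_R[OF bf] by (intro span_esub) (simp_all add: Rring_def)
    qed
    have "augm x' = ezero"
    proof -
      have 1: "augm x' = (\<lambda>u. \<Sum>w\<in>?W. x' w (lsub u w))" by (rule augm_sup[OF fW x'W])
      have 2: "augm x = (\<lambda>u. \<Sum>w\<in>?W. x w (lsub u w))" by (rule augm_sup[OF fW]) (auto simp: V_def)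
      have 3: "augm b = (\<lambda>u. \<Sum>w\<in>?W. b w (lsub u w))" by (rule augm_sup[OF fW bW])
      have 4: "augm b = ezero" using bs by (simp add: syz_def)
      show ?thesis using au 4 unfolding 1 2 3
        by (simp add: x'_def esub_def sum_subtractf fun_eq_iff ezero_def)
    qed
    hence x's: "x' \<in> syz q n D" using x'f by (simp add: syz_def)
    have "Sx x' \<subseteq> Sx x - {(v,t)}"
    proof
      fix p assume p: "p \<in> Sx x'"
      obtain w u where pw: "p = (w,u)" by (cases p)
      have nz: "x w u - b w u \<noteq> 0" using p by (simp add: pw Sx_def x'_def esub_def)
      have bvt: "b v t = c" unfolding b_def bzc_eval using v'(2) mt by auto
      have "x w u \<noteq> 0"
      proof
        assume z: "x w u = 0"
        hence "b w u \<noteq> 0" using nz by simp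
        hence "(w = v \<and> u = lsub m v) \<or> (w = v' \<and> u = lsub m v')" unfolding b_def by (rule bzc_nz)
        thus False using z vt v'(3) mt by auto
      qed
      moreover have "(w,u) \<noteq> (v,t)" using nz bvt by (auto simp: c_def)
      ultimately show "p \<in> Sx x - {(v,t)}" by (simp add: pw Sx_def)
    qed
    moreover have "(v,t) \<in> Sx x" using vt by (simp add: Sx_def)
    ultimately have "Sx x' \<subset> Sx x" by blast
    hence "card (Sx x') < card (Sx x)" by (rule psubset_card_mono[OF Sx_fin[OF xf]])
    hence IH: "esub (\<phi> x') (\<psi> x') = Lmap k a x'" using less.hyps x's by blast
    have pb: "\<phi> b = mono (c * Tf \<phi> k v v' m) (ladd m k)" unfolding b_def by (rule phi_bzc[OF cp vA v'A ubv ubv'])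
    have sb: "\<psi> b = mono (c * Tf \<psi> k v v' m) (ladd m k)" unfolding b_def by (rule phi_bzc[OF cs vA v'A ubv ubv'])
    have lb: "Lmap k a b = mono (c * (a v - a v')) (ladd m k)" unfolding b_def using v'(2) by (intro Lmap_bzc) simp
    have eb: "esub (\<phi> b) (\<psi> b) = Lmap k a b"
      unfolding pb sb lb using a[OF vA v'A ubv ubv']
      by (intro ext) (simp add: esub_def mono_def right_diff_distrib[symmetric])
    have h1: "\<phi> x = eadd (\<phi> x') (\<phi> b)" unfolding xx by (rule fhomD(2)[OF cp x's bs])
    have h2: "\<psi> x = eadd (\<psi> x') (\<psi> b)" unfolding xx by (rule fhomD(2)[OF cs x's bs])
    have h3: "Lmap k a x = eadd (Lmap k a x') (Lmap k a b)" unfolding xx by (rule Lmap_add[OF x'f bf])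
    show ?thesis
    proof (rule ext)
      fix w
      have e1: "\<phi> x' w - \<psi> x' w = Lmap k a x' w" using fun_cong[OF IH, of w] by (simp add: esub_def)
      have e2: "\<phi> b w - \<psi> b w = Lmap k a b w" using fun_cong[OF eb, of w] by (simp add: esub_def)
      have "esub (\<phi> x) (\<psi> x) w = (\<phi> x' w - \<psi> x' w) + (\<phi> b w - \<psi> b w)"
        unfolding h1 h2 by (simp add: esub_def eadd_def algebra_simps)
      also have "\<dots> = Lmap k a x w" unfolding e1 e2 h3 by (simp add: eadd_def)
      finally show "esub (\<phi> x) (\<psi> x) w = Lmap k a x w" .
    qed
  qed
qed


lemma fact_mono_free:
  assumes s: "s \<in> sigma_dual q n" and x: "x \<in> free_mod q n D"
  shows "free_act (mono c s) x \<in> free_mod q n D"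
  unfolding free_mod_def
proof (intro CollectI conjI allI impI)
  show "finite {v. free_act (mono c s) x v \<noteq> ezero}"
    by (rule finite_subset[OF fact_supp fm_fin[OF x]])
next
  fix v assume "free_act (mono c s) x v \<noteq> ezero"
  hence "x v \<noteq> ezero" by (auto simp: free_act_def)
  thus "v \<in> sec_poly q n D" by (rule fm_A[OF x])
next
  fix v
  have xv: "x v \<in> Rring q n" by (rule fm_R[OF x])
  have "supp (free_act (mono c s) x v) \<subseteq> (\<lambda>u. ladd u s) ` supp (x v)"
  proof
    fix w assume "w \<in> supp (free_act (mono c s) x v)"
    hence "x v (lsub w s) \<noteq> 0" by (simp add: supp_def free_act_def cmul_mono)
    moreover have "w = ladd (lsub w s) s" by (simp add: prod_eq_iff)
    ultimately show "w \<in> (\<lambda>u. ladd u s) ` supp (x v)" by (auto simp: supp_def)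
  qed
  moreover have "(\<lambda>u. ladd u s) ` supp (x v) \<subseteq> sigma_dual q n"
  proof
    fix w assume "w \<in> (\<lambda>u. ladd u s) ` supp (x v)"
    then obtain u where u: "u \<in> supp (x v)" "w = ladd u s" by blast
    have "u \<in> sigma_dual q n" using u(1) xv by (auto simp: Rring_def span_on_def)
    thus "w \<in> sigma_dual q n" using u(2) sd_add[OF _ s] by simp
  qed
  moreover have "finite ((\<lambda>u. ladd u s) ` supp (x v))" using R_fin[OF xv] by simp
  ultimately show "free_act (mono c s) x v \<in> Rring q n"
    unfolding Rring_def span_on_def by (auto intro: finite_subset)
qed

lemma chi_ebas:
  assumes "fhom q n (free_mod q n D) (Gamma q n E) k \<chi>" "p \<in> sec_poly q n D" "ladd p k \<notin> sec_poly q n E"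
  shows "\<chi> (ebas p) = ezero"
proof -
  have e: "ebas p \<in> free_mod q n D" by (rule ebas_free[OF assms(2)])
  have h: "\<chi> (ebas p) = mono (\<chi> (ebas p) (ladd p k)) (ladd p k)"
    by (rule homog_mono, rule fhomD(4)[OF assms(1) e ebas_homog])
  have "\<chi> (ebas p) \<in> Gamma q n E" by (rule fhomD(1)[OF assms(1) e])
  hence "supp (\<chi> (ebas p)) \<subseteq> sec_poly q n E" by (simp add: Gamma_def span_on_def)
  hence "\<chi> (ebas p) (ladd p k) = 0" using assms(3) by (auto simp: supp_def)
  thus ?thesis using h by (simp add: mono_def ezero_def)
qed

lemma chi_bzc:
  assumes chi: "fhom q n (free_mod q n D) (Gamma q n E) k \<chi>"
    and "v \<in> sec_poly q n D" "w \<in> sec_poly q n D" "ub m v" "ub m w"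
    and "ladd v k \<notin> sec_poly q n E" "ladd w k \<notin> sec_poly q n E"
  shows "\<chi> (bzc c v w m) = ezero"
proof -
  have X1: "free_act (mono c (lsub m v)) (ebas v) \<in> free_mod q n D"
    using assms(4) ebas_free[OF assms(2)] by (intro fact_mono_free) (simp_all add: ub_def)
  have X0: "free_act (mono (-c) (lsub m w)) (ebas w) \<in> free_mod q n D"
    using assms(5) ebas_free[OF assms(3)] by (intro fact_mono_free) (simp_all add: ub_def)
  have "\<chi> (bzc c v w m) = eadd (\<chi> (free_act (mono c (lsub m v)) (ebas v))) (\<chi> (free_act (mono (-c) (lsub m w)) (ebas w)))"
    unfolding bzc_def by (rule fhomD(2)[OF chi X1 X0])
  also have "\<chi> (free_act (mono c (lsub m v)) (ebas v)) = cmul (mono c (lsub m v)) (\<chi> (ebas v))"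
    using assms(4) ebas_free[OF assms(2)] by (intro fhomD(3)[OF chi] mono_R) (simp_all add: ub_def)
  also have "\<chi> (free_act (mono (-c) (lsub m w)) (ebas w)) = cmul (mono (-c) (lsub m w)) (\<chi> (ebas w))"
    using assms(5) ebas_free[OF assms(3)] by (intro fhomD(3)[OF chi] mono_R) (simp_all add: ub_def)
  finally show ?thesis using chi_ebas[OF chi assms(2,6)] chi_ebas[OF chi assms(3,7)]
    by (simp add: eadd_def ezero_def cmul_mono)
qed

lemma rel_iff:
  assumes cp: "fhom q n (syz q n D) (Gamma q n E) k \<phi>" and cs: "fhom q n (syz q n D) (Gamma q n E) k \<psi>"
  shows "ext1_rel q n D E k \<phi> \<psi> \<longleftrightarrow> Jf D E k \<phi> = Jf D E k \<psi>"
proof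
  assume r: "ext1_rel q n D E k \<phi> \<psi>"
  show "Jf D E k \<phi> = Jf D E k \<psi>"
  proof (cases "good D E k")
    case False thus ?thesis by (simp add: Jf_def)
  next
    case g: True
    note pp = good_pp[OF g]
    define p0 where "p0 = pp0 D E k"
    define p1 where "p1 = pp1 D E k"
    define M where "M = mmx p1 p0"
    have u1: "ub M p1" and u0: "ub M p0" using mmx unfolding M_def by blast+
    obtain \<chi> where chi: "fhom q n (free_mod q n D) (Gamma q n E) k \<chi>"
      and eq: "\<forall>x\<in>syz q n D. esub (\<phi> x) (\<psi> x) = \<chi> x"
      using r unfolding ext1_rel_def by blast
    have A1: "p1 \<in> sec_poly q n D" and A0: "p0 \<in> sec_poly q n D" using pp by (simp_all add: p0_def p1_def)
    have n1: "ladd p1 k \<notin> sec_poly q n E" using pp by (simp add: notB p1_def)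
    have n0: "ladd p0 k \<notin> sec_poly q n E" using pp by (simp add: notB p0_def)
    have bs: "bzc 1 p1 p0 M \<in> syz q n D" by (rule bzc_syz[OF A1 A0 u1 u0])
    have "esub (\<phi> (bzc 1 p1 p0 M)) (\<psi> (bzc 1 p1 p0 M)) = ezero"
      using eq bs chi_bzc[OF chi A1 A0 u1 u0 n1 n0] by simp
    hence "Tf \<phi> k p1 p0 M - Tf \<psi> k p1 p0 M = 0"
      unfolding Tf_def using fun_cong[of _ _ "ladd M k"] by (simp add: esub_def ezero_def fun_eq_iff)
    thus ?thesis using g by (simp add: Jf_def p0_def p1_def M_def)
  qed
next
  assume J: "Jf D E k \<phi> = Jf D E k \<psi>"
  define \<Delta> where "\<Delta> = (\<lambda>v w m. Tf \<phi> k v w m - Tf \<psi> k v w m)"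
  have ts: "Tsys D E k \<Delta>" unfolding \<Delta>_def by (rule Tsys_diff[OF Tsys_Tf[OF cp] Tsys_Tf[OF cs]])
  have h: "\<Delta> (pp1 D E k) (pp0 D E k) (mmx (pp1 D E k) (pp0 D E k)) = 0" if "good D E k"
    using J that by (simp add: Jf_def \<Delta>_def)
  obtain a where a0: "\<forall>v\<in>sec_poly q n D. ladd v k \<notin> sec_poly q n E \<longrightarrow> a v = 0"
    and a1: "\<forall>v w m. v \<in> sec_poly q n D \<longrightarrow> w \<in> sec_poly q n D \<longrightarrow> ub m v \<longrightarrow> ub m w \<longrightarrow> \<Delta> v w m = a v - a w"
    using potential[OF ts h] by blast
  have "fhom q n (free_mod q n D) (Gamma q n E) k (Lmap k a)" by (rule Lmap_fhom1[OF a0])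
  moreover have aa: "\<And>v w m. v \<in> sec_poly q n D \<Longrightarrow> w \<in> sec_poly q n D \<Longrightarrow> ub m v \<Longrightarrow> ub m w \<Longrightarrow>
           Tf \<phi> k v w m - Tf \<psi> k v w m = a v - a w" using a1 unfolding \<Delta>_def by blast
  have "\<forall>x\<in>syz q n D. esub (\<phi> x) (\<psi> x) = Lmap k a x"
    using cob[OF cp cs aa] by blast
  ultimately show "ext1_rel q n D E k \<phi> \<psi>" unfolding ext1_rel_def by blast
qed


definition Gc :: "divisor \<Rightarrow> lat \<Rightarrow> complex \<Rightarrow> lat \<Rightarrow> complex" where
  "Gc E k c v = (if inC1 E k v then c else 0)"

lemma Gc_coc:
  assumes "good D E k \<or> c = 0"
  shows "fhom q n (syz q n D) (Gamma q n E) k (Lmap k (Gc E k c))"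
proof (rule Lmap_fhom2, intro allI impI)
  fix m assume "ladd m k \<notin> sec_poly q n E"
  hence m: "inC0 E k m \<or> inC1 E k m" by (simp add: notB)
  show "\<exists>c'. \<forall>v\<in>sec_poly q n D. ub m v \<longrightarrow> Gc E k c v = c'"
  proof (cases "c = 0")
    case True thus ?thesis by (simp add: Gc_def)
  next
    case False
    hence g: "good D E k" using assms by simp
    show ?thesis
    proof (cases "inC1 E k m")
      case True
      hence "\<forall>v\<in>sec_poly q n D. ub m v \<longrightarrow> Gc E k c v = c" using ub_C1 by (auto simp: Gc_def)
      thus ?thesis by blast
    next
      case False
      hence m0: "inC0 E k m" using m by simp
      have "\<forall>v\<in>sec_poly q n D. ub m v \<longrightarrow> Gc E k c v = 0"
      proof (intro ballI impI)
        fix v assume v: "v \<in> sec_poly q n D" "ub m v"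
        have "inC0 E k v" using ub_C0[OF v(2) m0] .
        hence "\<not> inC1 E k v" using g v(1) unfolding good_def by blast
        thus "Gc E k c v = 0" by (simp add: Gc_def)
      qed
      thus ?thesis by blast
    qed
  qed
qed

lemma Jf_Gc:
  assumes g: "good D E k"
  shows "Jf D E k (Lmap k (Gc E k c)) = c"
proof -
  note pp = good_pp[OF g]
  have ne: "pp1 D E k \<noteq> pp0 D E k" using pp by metis
  have "Jf D E k (Lmap k (Gc E k c)) = Lmap k (Gc E k c) (bzc 1 (pp1 D E k) (pp0 D E k) (mmx (pp1 D E k) (pp0 D E k)))
          (ladd (mmx (pp1 D E k) (pp0 D E k)) k)"
    using g by (simp add: Jf_def Tf_def)
  also have "\<dots> = Gc E k c (pp1 D E k) - Gc E k c (pp0 D E k)"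
    unfolding Lmap_bzc[OF ne] by (simp add: mono_def)
  also have "\<dots> = c" using pp by (simp add: Gc_def)
  finally show ?thesis .
qed

lemma Jf_hadd: "Jf D E k (hadd \<phi> \<psi>) = Jf D E k \<phi> + Jf D E k \<psi>"
  by (simp add: Jf_def Tf_def hadd_def eadd_def)

lemma Jf_zero: "Jf D E k (\<lambda>_. ezero) = 0"
  by (simp add: Jf_def Tf_def ezero_def)

lemma Tf_hact: "Tf (hact (mono c u) \<phi>) (ladd k u) v w m = c * Tf \<phi> k v w m"
proof -
  have "lsub (ladd m (ladd k u)) u = ladd m k" by (simp add: prod_eq_iff)
  thus ?thesis by (simp add: Tf_def hact_def cmul_mono)
qed

lemma zero_coc: "fhom q n Dom (Gamma q n E) k (\<lambda>_. ezero)"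
  unfolding fhom_def
  by (auto simp: Gamma_def span_on_def supp_def homog_def eadd_def ezero_def cmul_def)

lemma hadd_coc:
  assumes a: "fhom q n Dom (Gamma q n E) k \<phi>" and b: "fhom q n Dom (Gamma q n E) k \<psi>"
  shows "fhom q n Dom (Gamma q n E) k (hadd \<phi> \<psi>)"
  unfolding fhom_def
proof (intro conjI ballI allI impI)
  fix x assume x: "x \<in> Dom"
  show "hadd \<phi> \<psi> x \<in> Gamma q n E" unfolding hadd_def Gamma_def
    by (rule span_eadd) (use fhomD(1)[OF a x] fhomD(1)[OF b x] in \<open>simp_all add: Gamma_def\<close>)
next
  fix x y assume "x \<in> Dom" "y \<in> Dom"
  thus "hadd \<phi> \<psi> (free_add x y) = eadd (hadd \<phi> \<psi> x) (hadd \<phi> \<psi> y)"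
    using fhomD(2)[OF a] fhomD(2)[OF b] by (simp add: hadd_def eadd_def fun_eq_iff)
next
  fix r x assume "r \<in> Rring q n" "x \<in> Dom"
  thus "hadd \<phi> \<psi> (free_act r x) = cmul r (hadd \<phi> \<psi> x)"
    using fhomD(3)[OF a] fhomD(3)[OF b] by (simp add: hadd_def eadd_def cmul_def fun_eq_iff sum.distrib distrib_left)
next
  fix x m assume xm: "x \<in> Dom" "free_homog x m"
  have "homog (\<phi> x) (ladd m k)" "homog (\<psi> x) (ladd m k)" using fhomD(4)[OF a xm] fhomD(4)[OF b xm] .
  thus "homog (hadd \<phi> \<psi> x) (ladd m k)"
    using supp_eadd[of "\<phi> x" "\<psi> x"] unfolding homog_def hadd_def by blast
qed

lemma hact_coc:
  assumes a: "fhom q n Dom (Gamma q n E) k \<phi>" and u: "u \<in> sigma_dual q n"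
  shows "fhom q n Dom (Gamma q n E) (ladd k u) (hact (mono c u) \<phi>)"
  unfolding fhom_def
proof (intro conjI ballI allI impI)
  fix x assume x: "x \<in> Dom"
  have f: "\<phi> x \<in> Gamma q n E" by (rule fhomD(1)[OF a x])
  have "supp (hact (mono c u) \<phi> x) \<subseteq> (\<lambda>w. ladd w u) ` supp (\<phi> x)"
  proof
    fix w assume "w \<in> supp (hact (mono c u) \<phi> x)"
    hence "\<phi> x (lsub w u) \<noteq> 0" by (simp add: supp_def hact_def cmul_mono)
    moreover have "w = ladd (lsub w u) u" by (simp add: prod_eq_iff)
    ultimately show "w \<in> (\<lambda>w. ladd w u) ` supp (\<phi> x)" by (auto simp: supp_def)
  qed
  moreover have "(\<lambda>w. ladd w u) ` supp (\<phi> x) \<subseteq> sec_poly q n E"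
  proof
    fix w assume "w \<in> (\<lambda>w. ladd w u) ` supp (\<phi> x)"
    then obtain y where y: "y \<in> supp (\<phi> x)" "w = ladd y u" by blast
    have "y \<in> sec_poly q n E" using y(1) f by (auto simp: Gamma_def span_on_def)
    thus "w \<in> sec_poly q n E" using y(2) sp_add[OF _ u] by simp
  qed
  moreover have "finite ((\<lambda>w. ladd w u) ` supp (\<phi> x))" using f by (simp add: Gamma_def span_on_def)
  ultimately show "hact (mono c u) \<phi> x \<in> Gamma q n E"
    unfolding Gamma_def span_on_def by (auto intro: finite_subset)
next
  fix x y assume "x \<in> Dom" "y \<in> Dom"
  hence e: "\<phi> (free_add x y) = eadd (\<phi> x) (\<phi> y)" by (rule fhomD(2)[OF a])
  show "hact (mono c u) \<phi> (free_add x y) = eadd (hact (mono c u) \<phi> x) (hact (mono c u) \<phi> y)"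
    unfolding hact_def e by (simp add: eadd_def cmul_mono distrib_left)
next
  fix r x assume "r \<in> Rring q n" "x \<in> Dom"
  hence e: "\<phi> (free_act r x) = cmul r (\<phi> x)" by (rule fhomD(3)[OF a])
  show "hact (mono c u) \<phi> (free_act r x) = cmul r (hact (mono c u) \<phi> x)"
    unfolding hact_def e cmul_mono
    by (rule ext) (simp add: cmul_def sum_distrib_left lsub_swap mult.left_commute)
next
  fix x m assume x: "x \<in> Dom" and h: "free_homog x m"
  have hh: "homog (\<phi> x) (ladd m k)" by (rule fhomD(4)[OF a x h])
  show "homog (hact (mono c u) \<phi> x) (ladd m (ladd k u))" unfolding homog_def
  proof
    fix w assume "w \<in> supp (hact (mono c u) \<phi> x)"
    hence "\<phi> x (lsub w u) \<noteq> 0" by (simp add: supp_def hact_def cmul_mono)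
    hence "lsub w u = ladd m k" using hh by (auto simp: homog_def supp_def)
    hence "w = ladd m (ladd k u)" by (auto simp: prod_eq_iff)
    thus "w \<in> {ladd m (ladd k u)}" by simp
  qed
qed


lemma C_shift0: "u \<in> sigma_dual q n \<Longrightarrow> inC0 E (ladd k u) m \<Longrightarrow> inC0 E k m"
  by (simp add: inC0_def sd_iff)
lemma C_shift1: "u \<in> sigma_dual q n \<Longrightarrow> inC1 E (ladd k u) m \<Longrightarrow> inC1 E k m"
  by (simp add: inC1_def sd_iff algebra_simps)

lemma Lshift:
  assumes cp: "fhom q n (syz q n D) (Gamma q n E) k \<phi>" and u: "u \<in> sigma_dual q n"
    and g': "good D E (ladd k u)"
  shows "Jf D E (ladd k u) (hact (mono c u) \<phi>) = c * Jf D E k \<phi>"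
proof -
  note pp' = good_pp[OF g']
  define P0 where "P0 = pp0 D E (ladd k u)"
  define P1 where "P1 = pp1 D E (ladd k u)"
  have A0: "P0 \<in> sec_poly q n D" and A1: "P1 \<in> sec_poly q n D" using pp' by (simp_all add: P0_def P1_def)
  have C0: "inC0 E k P0" using C_shift0[OF u] pp' by (simp add: P0_def)
  have C1: "inC1 E k P1" using C_shift1[OF u] pp' by (simp add: P1_def)
  have ts: "Tsys D E k (Tf \<phi> k)" by (rule Tsys_Tf[OF cp])
  have "Jf D E (ladd k u) (hact (mono c u) \<phi>) = c * Tf \<phi> k P1 P0 (mmx P1 P0)"
    using g' by (simp add: Jf_def Tf_hact P0_def P1_def)
  also have "Tf \<phi> k P1 P0 (mmx P1 P0) = Jf D E k \<phi>"
  proof (cases "good D E k")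
    case g: True
    note pp = good_pp[OF g]
    define p0 where "p0 = pp0 D E k"
    define p1 where "p1 = pp1 D E k"
    have a0: "p0 \<in> sec_poly q n D" "inC0 E k p0" and a1: "p1 \<in> sec_poly q n D" "inC1 E k p1"
      using pp by (simp_all add: p0_def p1_def)
    have "Tf \<phi> k P1 P0 (mmx P1 P0) = Dp (Tf \<phi> k) P1 P0" by (rule D1[OF ts A1 A0 mmx(1) mmx(2)])
    also have "\<dots> = Dp (Tf \<phi> k) P1 p1 + (Dp (Tf \<phi> k) p1 p0 + Dp (Tf \<phi> k) p0 P0)"
      using D2[OF ts A1 a1(1) A0] D2[OF ts a1(1) a0(1) A0] by simp
    also have "\<dots> = Dp (Tf \<phi> k) p1 p0"
      using D4b[OF ts A1 a1(1) C1 a1(2)] D4a[OF ts a0(1) A0 a0(2) C0] by simp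
    also have "\<dots> = Jf D E k \<phi>" using g D1[OF ts a1(1) a0(1) mmx(1) mmx(2)] by (simp add: Jf_def p0_def p1_def)
    finally show ?thesis .
  next
    case ng: False
    then obtain w where w: "w \<in> sec_poly q n D" "inC0 E k w" "inC1 E k w"
      using A0 A1 C0 C1 unfolding good_def by blast
    have "Tf \<phi> k P1 P0 (mmx P1 P0) = Dp (Tf \<phi> k) P1 P0" by (rule D1[OF ts A1 A0 mmx(1) mmx(2)])
    also have "\<dots> = Dp (Tf \<phi> k) P1 w + Dp (Tf \<phi> k) w P0" using D2[OF ts A1 w(1) A0] by simp
    also have "\<dots> = 0" using D4b[OF ts A1 w(1) C1 w(3)] D4a[OF ts w(1) A0 w(2) C0] by simp
    finally show ?thesis using ng by (simp add: Jf_def)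
  qed
  finally show ?thesis .
qed

lemma good_sym_aux:
  fixes D D' :: divisor
  assumes "good D (div_sub canonical D') k"
  shows "(\<exists>p\<in>sec_poly q n D'. inC0 (div_sub canonical D) k p) \<and> (\<exists>p\<in>sec_poly q n D'. inC1 (div_sub canonical D) k p)"
proof -
  have e0: "inC0 (div_sub canonical E) k p \<longleftrightarrow> fst p + fst k \<le> fst E" for E p
    by (simp add: inC0_def div_sub_def canonical_def)
  have e1: "inC1 (div_sub canonical E) k p \<longleftrightarrow> - q * (fst p + fst k) + n * (snd p + snd k) \<le> snd E" for E p
    by (simp add: inC1_def div_sub_def canonical_def)
  obtain p where p: "p \<in> sec_poly q n D" "inC0 (div_sub canonical D') k p" using assms unfolding good_def by blast
  obtain r where r: "r \<in> sec_poly q n D" "inC1 (div_sub canonical D') k r" using assms unfolding good_def by blast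
  have p1: "- fst D \<le> fst p" "fst p + fst k \<le> fst D'" using p by (simp_all add: sp_iff e0)
  have r1: "- snd D \<le> - q * fst r + n * snd r" "- q * (fst r + fst k) + n * (snd r + snd k) \<le> snd D'"
    using r by (simp_all add: sp_iff e1)
  define c where "c = - snd D' + q * (- fst p - fst k) - n * (- snd p - snd k)"
  define b where "b = \<bar>c\<bar>"
  have bc: "c \<le> n * b" by (rule big[OF npos]) (simp add: b_def)
  define p' where "p' = (- fst p - fst k, - snd p - snd k + b)"
  have "p' \<in> sec_poly q n D'" using p1 bc by (simp add: sp_iff p'_def c_def algebra_simps)
  moreover have "inC0 (div_sub canonical D) k p'" using p1 by (simp add: e0 p'_def)
  moreover
  define t where "t = \<bar>- fst D' + fst r + fst k\<bar>"
  have tc: "- fst D' + fst r + fst k \<le> n * t" by (rule big[OF npos]) (simp add: t_def)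
  define r' where "r' = (- fst r - fst k + t * n, - snd r - snd k + t * q)"
  have "r' \<in> sec_poly q n D'" using r1 tc by (simp add: sp_iff r'_def algebra_simps)
  moreover have "inC1 (div_sub canonical D) k r'" using r1 by (simp add: e1 r'_def algebra_simps)
  ultimately show ?thesis by blast
qed

lemma both_aux:
  fixes D D' :: divisor
  assumes "p \<in> sec_poly q n D" "inC0 (div_sub canonical D') k p" "inC1 (div_sub canonical D') k p"
  shows "\<exists>p'\<in>sec_poly q n D'. inC0 (div_sub canonical D) k p' \<and> inC1 (div_sub canonical D) k p'"
proof -
  have e0: "inC0 (div_sub canonical E) k p \<longleftrightarrow> fst p + fst k \<le> fst E" for E p
    by (simp add: inC0_def div_sub_def canonical_def)
  have e1: "inC1 (div_sub canonical E) k p \<longleftrightarrow> - q * (fst p + fst k) + n * (snd p + snd k) \<le> snd E" for E p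
    by (simp add: inC1_def div_sub_def canonical_def)
  define p' where "p' = (- fst p - fst k, - snd p - snd k)"
  have "p' \<in> sec_poly q n D'" "inC0 (div_sub canonical D) k p'" "inC1 (div_sub canonical D) k p'"
    using assms by (simp_all add: sp_iff e0 e1 p'_def algebra_simps)
  thus ?thesis by blast
qed

lemma good_sym1:
  fixes D D' :: divisor
  assumes "good D (div_sub canonical D') k" shows "good D' (div_sub canonical D) k"
proof -
  have "\<not> (\<exists>p\<in>sec_poly q n D'. inC0 (div_sub canonical D) k p \<and> inC1 (div_sub canonical D) k p)"
  proof
    assume "\<exists>p\<in>sec_poly q n D'. inC0 (div_sub canonical D) k p \<and> inC1 (div_sub canonical D) k p"
    then obtain p where "p \<in> sec_poly q n D'" "inC0 (div_sub canonical D) k p" "inC1 (div_sub canonical D) k p" by blast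
    from both_aux[OF this] assms show False unfolding good_def by blast
  qed
  thus ?thesis using good_sym_aux[OF assms] unfolding good_def by blast
qed

lemma good_sym: "good D (div_sub canonical D') k \<longleftrightarrow> good D' (div_sub canonical D) k"
  using good_sym1 by blast


lemma homog_R_cases:
  assumes "r \<in> Rring q n" "homog r u"
  shows "r = mono (r u) u \<and> (r u \<noteq> 0 \<longrightarrow> u \<in> sigma_dual q n)"
  using homog_mono[OF assms(2)] R_S[OF assms(1)] by blast

lemma hact_mono0: "hact (mono 0 u) \<phi> = (\<lambda>_. ezero)"
  by (simp add: hact_def cmul_mono ezero_def)

theorem main_iso:
  fixes D D' :: divisor
  shows "ext1_graded_iso q n D (div_sub canonical D') D' (div_sub canonical D)"
proof -
  define E1 where "E1 = div_sub canonical D'"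
  define E2 where "E2 = div_sub canonical D"
  have gs: "good D E1 k \<longleftrightarrow> good D' E2 k" for k unfolding E1_def E2_def by (rule good_sym)
  define \<Phi> where "\<Phi> = (\<lambda>k \<phi>. Lmap k (Gc E2 k (Jf D E1 k \<phi>)))"
  have c1: "\<phi> \<in> ext1_cocyc q n D E1 k \<longleftrightarrow> fhom q n (syz q n D) (Gamma q n E1) k \<phi>" for \<phi> k
    by (simp add: ext1_cocyc_def)
  have c2: "\<phi> \<in> ext1_cocyc q n D' E2 k \<longleftrightarrow> fhom q n (syz q n D') (Gamma q n E2) k \<phi>" for \<phi> k
    by (simp add: ext1_cocyc_def)
  have F1: "fhom q n (syz q n D') (Gamma q n E2) k (\<Phi> k \<phi>)" for k \<phi>
  proof -
    have "good D' E2 k \<or> Jf D E1 k \<phi> = 0" using gs[of k] by (auto simp: Jf_def)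
    thus ?thesis unfolding \<Phi>_def by (rule Gc_coc)
  qed
  have F2: "Jf D' E2 k (\<Phi> k \<phi>) = Jf D E1 k \<phi>" for k \<phi>
  proof (cases "good D' E2 k")
    case True thus ?thesis unfolding \<Phi>_def by (rule Jf_Gc)
  next
    case False thus ?thesis using gs[of k] by (simp add: Jf_def)
  qed
  show ?thesis
    unfolding ext1_graded_iso_def E1_def[symmetric] E2_def[symmetric]
  proof (rule exI[of _ \<Phi>], intro allI conjI ballI impI)
    fix k \<phi> assume "\<phi> \<in> ext1_cocyc q n D E1 k"
    show "\<Phi> k \<phi> \<in> ext1_cocyc q n D' E2 k" using F1 by (simp add: c2)
  next
    fix k \<phi> \<psi> assume a: "\<phi> \<in> ext1_cocyc q n D E1 k" "\<psi> \<in> ext1_cocyc q n D E1 k"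
    show "ext1_rel q n D E1 k \<phi> \<psi> = ext1_rel q n D' E2 k (\<Phi> k \<phi>) (\<Phi> k \<psi>)"
    proof -
      have p1: "fhom q n (syz q n D) (Gamma q n E1) k \<phi>" "fhom q n (syz q n D) (Gamma q n E1) k \<psi>"
        using a by (simp_all add: c1)
      have r1: "ext1_rel q n D E1 k \<phi> \<psi> \<longleftrightarrow> Jf D E1 k \<phi> = Jf D E1 k \<psi>" by (rule rel_iff[OF p1])
      have r2: "ext1_rel q n D' E2 k (\<Phi> k \<phi>) (\<Phi> k \<psi>) \<longleftrightarrow> Jf D' E2 k (\<Phi> k \<phi>) = Jf D' E2 k (\<Phi> k \<psi>)"
        by (rule rel_iff[OF F1 F1])
      show ?thesis unfolding r1 r2 F2 ..
    qed
  next
    fix k \<chi> assume a: "\<chi> \<in> ext1_cocyc q n D' E2 k"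
    define \<phi> where "\<phi> = Lmap k (Gc E1 k (Jf D' E2 k \<chi>))"
    have "good D E1 k \<or> Jf D' E2 k \<chi> = 0" using gs[of k] by (auto simp: Jf_def)
    hence pc: "fhom q n (syz q n D) (Gamma q n E1) k \<phi>" unfolding \<phi>_def by (rule Gc_coc)
    have J: "Jf D E1 k \<phi> = Jf D' E2 k \<chi>"
    proof (cases "good D E1 k")
      case True thus ?thesis unfolding \<phi>_def by (rule Jf_Gc)
    next
      case False thus ?thesis using gs[of k] by (simp add: Jf_def)
    qed
    have a2: "fhom q n (syz q n D') (Gamma q n E2) k \<chi>" using a by (simp add: c2)
    have "ext1_rel q n D' E2 k (\<Phi> k \<phi>) \<chi>"
      unfolding rel_iff[OF F1 a2] F2 J ..
    moreover have "\<phi> \<in> ext1_cocyc q n D E1 k" using pc by (simp add: c1)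
    ultimately show "\<exists>\<phi>\<in>ext1_cocyc q n D E1 k. ext1_rel q n D' E2 k (\<Phi> k \<phi>) \<chi>" by blast
  next
    fix k \<phi> \<psi> assume a: "\<phi> \<in> ext1_cocyc q n D E1 k" "\<psi> \<in> ext1_cocyc q n D E1 k"
    have h: "fhom q n (syz q n D') (Gamma q n E2) k (hadd (\<Phi> k \<phi>) (\<Phi> k \<psi>))" by (rule hadd_coc[OF F1 F1])
    show "ext1_rel q n D' E2 k (\<Phi> k (hadd \<phi> \<psi>)) (hadd (\<Phi> k \<phi>) (\<Phi> k \<psi>))"
      unfolding rel_iff[OF F1 h] F2 Jf_hadd ..
  next
    fix k u r \<phi> assume r: "r \<in> Rring q n" and hr: "homog r u" and a: "\<phi> \<in> ext1_cocyc q n D E1 k"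
    have pc: "fhom q n (syz q n D) (Gamma q n E1) k \<phi>" using a by (simp add: c1)
    have rr: "r = mono (r u) u" and ru: "r u \<noteq> 0 \<Longrightarrow> u \<in> sigma_dual q n" using homog_R_cases[OF r hr] by blast+
    show "ext1_rel q n D' E2 (ladd k u) (\<Phi> (ladd k u) (hact r \<phi>)) (hact r (\<Phi> k \<phi>))"
    proof (cases "r u = 0")
      case True
      hence z: "hact r \<psi> = (\<lambda>_. ezero)" for \<psi> using rr hact_mono0 by metis
      have "Jf D E1 (ladd k u) (\<lambda>_. ezero) = 0" by (rule Jf_zero)
      thus ?thesis unfolding z rel_iff[OF F1 zero_coc] F2 Jf_zero .
    next
      case False
      hence u: "u \<in> sigma_dual q n" by (rule ru)
      have hc: "fhom q n (syz q n D) (Gamma q n E1) (ladd k u) (hact r \<phi>)" 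
        using hact_coc[OF pc u] rr by metis
      have hc2: "fhom q n (syz q n D') (Gamma q n E2) (ladd k u) (hact r (\<Phi> k \<phi>))" 
        using hact_coc[OF F1 u] rr by metis
      have "Jf D E1 (ladd k u) (hact r \<phi>) = Jf D' E2 (ladd k u) (hact r (\<Phi> k \<phi>))"
      proof (cases "good D' E2 (ladd k u)")
        case True
        hence g1: "good D E1 (ladd k u)" using gs by blast
        have "Jf D E1 (ladd k u) (hact r \<phi>) = r u * Jf D E1 k \<phi>"
          using Lshift[OF pc u g1] rr by metis
        moreover have "Jf D' E2 (ladd k u) (hact r (\<Phi> k \<phi>)) = r u * Jf D' E2 k (\<Phi> k \<phi>)"
          using Lshift[OF F1 u True] rr by metis
        ultimately show ?thesis using F2 by simp
      next
        case False thus ?thesis using gs by (simp add: Jf_def)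
      qed
      thus ?thesis unfolding rel_iff[OF F1 hc2] F2 .
    qed
  qed
qed

end

theorem mainTheorem1:
  fixes q n :: int and D D' :: divisor
  assumes "0 < q" and "q < n" and "coprime q n"
  shows "ext1_graded_iso q n D (div_sub canonical D') D' (div_sub canonical D)"
proof -
  interpret cq q n by unfold_locales (use assms in simp)
  show ?thesis by (rule main_iso)
qed

end
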